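(* Let $f:[0,1]\times\mathbb{R}^4\to\mathbb{R}$ be continuous, and suppose there exists a constant $M>0$ such that $$|f(x,u,y,v,z)|\le \frac{M}{2}\quad\text{for all }(x,u,y,v,z)\in\mathcal{D}_M,$$ where $$\mathcal{D}_M=\Big\{(x,u,y,v,z)\;:\;0\le x\le 1,\ |u|\le \tfrac{M}{384},\ |y|\le \tfrac{M}{72\sqrt3},\ |v|\le M,\ |z|\le M\Big\}.$$ Then the boundary value problem $$u^{(4)}(x)=f(x,u(x),u'(x),u''(x),u'''(x)),\quad 0<x<1,\qquad u(0)=u(1)=0,\quad u'(0)=u'(1)=0,$$ has at least one solution.
   Context: A solution means a function $u\in C^4[0,1]$ satisfying the differential equation on $(0,1)$ and the four boundary conditions. *)

theory Defs
  imports "HOL-Analysis.Analysis"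
begin

definition C4_with_derivs ::
  "(real \<Rightarrow> real) \<Rightarrow> (real \<Rightarrow> real) \<Rightarrow> (real \<Rightarrow> real) \<Rightarrow> (real \<Rightarrow> real) \<Rightarrow> (real \<Rightarrow> real) \<Rightarrow> bool"
  where "C4_with_derivs u u1 u2 u3 u4 \<longleftrightarrow>
    (\<forall>x\<in>{0..1}. (u has_real_derivative u1 x) (at x within {0..1}) \<and>
                 (u1 has_real_derivative u2 x) (at x within {0..1}) \<and>
                 (u2 has_real_derivative u3 x) (at x within {0..1}) \<and>
                 (u3 has_real_derivative u4 x) (at x within {0..1})) \<and>
    continuous_on {0..1} u4"

definition D_M :: "real \<Rightarrow> (real \<times> real \<times> real \<times> real \<times> real) set" where
  "D_M M = {(x,u,y,v,z). 0 \<le> x \<and> x \<le> 1 \<and> \<bar>u\<bar> \<le> M / 384 \<and>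
              \<bar>y\<bar> \<le> M / (72 * sqrt 3) \<and> \<bar>v\<bar> \<le> M \<and> \<bar>z\<bar> \<le> M}"

end

theory Submission
  imports Defs
begin

lemma grid_point:
  fixes x :: real and m :: nat
  assumes "x \<in> {0..1}"
  shows "\<exists>i\<le>Suc m. \<bar>x - real i / real (Suc m)\<bar> \<le> 1 / real (Suc m)"
proof -
  define i where "i = nat \<lfloor>x * real (Suc m)\<rfloor>"
  have x0: "0 \<le> x * real (Suc m)" using assms by auto
  have "real i = of_int \<lfloor>x * real (Suc m)\<rfloor>" using x0 by (simp add: i_def)
  then have i1: "real i \<le> x * real (Suc m)" and i2: "x * real (Suc m) < real i + 1"
    by linarith+
  have "x * real (Suc m) \<le> real (Suc m)" using assms by (simp add: mult_left_le_one_le)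
  then have "i \<le> Suc m" using i1 by linarith
  moreover have "\<bar>x - real i / real (Suc m)\<bar> \<le> 1 / real (Suc m)"
  proof -
    have "\<bar>x * real (Suc m) - real i\<bar> \<le> 1" using i1 i2 by linarith
    moreover have "x - real i / real (Suc m) = (x * real (Suc m) - real i) / real (Suc m)"
      by (simp add: field_simps)
    ultimately show ?thesis
      by (simp add: abs_divide divide_right_mono del: of_nat_Suc)
  qed
  ultimately show ?thesis by blast
qed

lemma ascoli:
  fixes g :: "nat \<Rightarrow> real \<Rightarrow> real" and B L :: real
  assumes bnd: "\<And>n x. x \<in> {0..1} \<Longrightarrow> \<bar>g n x\<bar> \<le> B"
    and lip: "\<And>n x y. x \<in> {0..1} \<Longrightarrow> y \<in> {0..1} \<Longrightarrow> \<bar>g n x - g n y\<bar> \<le> L * \<bar>x - y\<bar>"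
  shows "\<exists>r w. strict_mono r \<and> uniform_limit {0..1} (\<lambda>n. g (r n)) w sequentially"
proof -
  define q where "q k = (case prod_decode k of (i,j) \<Rightarrow> min 1 (real i / real (Suc j)))" for k
  have q01: "q k \<in> {0..1}" for k
    by (auto simp: q_def split: prod.splits)
  have qenc: "q (prod_encode (i, m)) = real i / real (Suc m)" if "i \<le> Suc m" for i m
    using that by (simp add: q_def)
  define S where "S = {f::nat\<Rightarrow>real. \<forall>k. f k \<in> {-B..B}}"
  have "compact S"
  proof -
    have "compactin (product_topology (\<lambda>i. euclidean) UNIV) (PiE UNIV (\<lambda>_::nat. {-B..B::real}))"
      by (simp add: compactin_PiE)
    then show ?thesis
      by (simp add: S_def euclidean_product_topology PiE_UNIV_domain Pi_def)
  qed
  then have "seq_compact S" by (rule compact_imp_seq_compact)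
  moreover have "\<forall>n. (\<lambda>k. g n (q k)) \<in> S"
  proof (intro allI)
    fix n
    have h: "\<bar>g n (q k)\<bar> \<le> B" for k using bnd q01 by blast
    then show "(\<lambda>k. g n (q k)) \<in> S" unfolding S_def
    proof (intro CollectI allI)
      fix k have "\<bar>g n (q k)\<bar> \<le> B" by (rule h)
      then show "g n (q k) \<in> {-B..B}" by (simp add: abs_le_iff)
    qed
  qed
  ultimately obtain l r where l: "l \<in> S" and r: "strict_mono r"
    and lim: "((\<lambda>n. (\<lambda>k. g n (q k))) \<circ> r) \<longlonglongrightarrow> l"
    unfolding seq_compact_def by metis
  have conv: "(\<lambda>n. g (r n) (q k)) \<longlonglongrightarrow> l k" for k
  proof -
    have "(\<lambda>n. ((\<lambda>n. (\<lambda>k. g n (q k))) \<circ> r) n k) \<longlonglongrightarrow> l k"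
      by (rule continuous_on_tendsto_compose[OF continuous_on_product_coordinates lim]) auto
    then show ?thesis by simp
  qed
  have cau: "\<exists>N. \<forall>a\<ge>N. \<forall>b\<ge>N. \<bar>g (r a) (q k) - g (r b) (q k)\<bar> < e" if "e > 0" for k e
    using LIMSEQ_imp_Cauchy[OF conv[of k]] that unfolding Cauchy_def dist_real_def by blast
  have "uniformly_Cauchy_on {0..1} (\<lambda>n. g (r n))"
    unfolding uniformly_Cauchy_on_def
  proof (intro allI impI)
    fix e :: real assume e: "e > 0"
    obtain m :: nat where m: "3 * (\<bar>L\<bar> + 1) / e < real (Suc m)"
      using reals_Archimedean2 by (metis less_Suc_eq of_nat_less_iff order_less_trans)
    have m2: "\<bar>L\<bar> / real (Suc m) < e / 3"
    proof -
      have "3 * (\<bar>L\<bar> + 1) < real (Suc m) * e" using m e by (simp add: field_simps)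
      then have "3 * \<bar>L\<bar> < real (Suc m) * e" by argo
      then show ?thesis by (simp add: field_simps)
    qed
    have "\<forall>i. \<exists>N. \<forall>a\<ge>N. \<forall>b\<ge>N. \<bar>g (r a) (q (prod_encode (i,m))) - g (r b) (q (prod_encode (i,m)))\<bar> < e/3"
      using cau[of "e/3"] e by (intro allI) simp
    then obtain N where N: "\<And>i a b. a \<ge> N i \<Longrightarrow> b \<ge> N i \<Longrightarrow>
        \<bar>g (r a) (q (prod_encode (i,m))) - g (r b) (q (prod_encode (i,m)))\<bar> < e/3"
      by metis
    define N0 where "N0 = Max (N ` {..Suc m})"
    show "\<exists>M. \<forall>x\<in>{0..1}. \<forall>a\<ge>M. \<forall>b\<ge>M. dist (g (r a) x) (g (r b) x) < e"
    proof (intro exI ballI allI impI)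
      fix x a b assume x: "x \<in> {0..(1::real)}" and a: "N0 \<le> a" and b: "N0 \<le> b"
      obtain i where i: "i \<le> Suc m" and xi: "\<bar>x - real i / real (Suc m)\<bar> \<le> 1 / real (Suc m)"
        using grid_point[OF x] by blast
      let ?p = "q (prod_encode (i,m))"
      have p: "?p = real i / real (Suc m)" using qenc[OF i] .
      have Ni: "N i \<le> N0" unfolding N0_def using i by (intro Max_ge) auto
      have p01: "?p \<in> {0..1}" by (rule q01)
      have d: "L * \<bar>x - ?p\<bar> < e/3"
      proof -
        have "L * \<bar>x - ?p\<bar> \<le> \<bar>L\<bar> * \<bar>x - ?p\<bar>" by (simp add: mult_right_mono)
        also have "\<dots> \<le> \<bar>L\<bar> * (1 / real (Suc m))" using xi p by (intro mult_left_mono) auto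
        finally have "L * \<bar>x - ?p\<bar> \<le> \<bar>L\<bar> / real (Suc m)" by simp
        then show ?thesis using m2 by linarith
      qed
      have 1: "\<bar>g (r a) x - g (r a) ?p\<bar> < e/3" using lip[OF x p01, of "r a"] d by linarith
      have 2: "\<bar>g (r b) x - g (r b) ?p\<bar> < e/3" using lip[OF x p01, of "r b"] d by linarith
      have 3: "\<bar>g (r a) ?p - g (r b) ?p\<bar> < e/3" using N[of i a b] a b Ni by simp
      show "dist (g (r a) x) (g (r b) x) < e"
        unfolding dist_real_def using 1 2 3 by linarith
    qed
  qed
  then have "uniformly_convergent_on {0..1} (\<lambda>n. g (r n))"
    by (rule Cauchy_uniformly_convergent)
  then show ?thesis using r unfolding uniformly_convergent_on_def by blast
qed

lemma mvt01:
  fixes f f' :: "real \<Rightarrow> real"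
  assumes d: "\<And>x. x \<in> {0..1} \<Longrightarrow> (f has_real_derivative f' x) (at x within {0..1})"
    and ab: "0 \<le> a" "a \<le> b" "b \<le> 1"
  shows "\<exists>z\<in>{a..b}. f b - f a = f' z * (b - a)"
proof -
  have "(f has_derivative (*) (f' x)) (at x within {a..b})" if "a \<le> x" "x \<le> b" for x
  proof -
    have "(f has_real_derivative f' x) (at x within {a..b})"
      using d[of x] that ab by (auto intro: DERIV_subset)
    then show ?thesis by (simp add: has_field_derivative_def)
  qed
  from mvt_very_simple[OF ab(2) this] show ?thesis by auto
qed

lemma rolle01:
  fixes f f' :: "real \<Rightarrow> real"
  assumes d: "\<And>x. x \<in> {0..1} \<Longrightarrow> (f has_real_derivative f' x) (at x within {0..1})"
    and ab: "0 \<le> a" "a < b" "b \<le> 1" and eq: "f a = f b"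
  shows "\<exists>z\<in>{a<..<b}. f' z = 0"
proof -
  have "(f has_derivative (*) (f' x)) (at x within {a..b})" if "a \<le> x" "x \<le> b" for x
  proof -
    have "(f has_real_derivative f' x) (at x within {a..b})"
      using d[of x] that ab by (auto intro: DERIV_subset)
    then show ?thesis by (simp add: has_field_derivative_def)
  qed
  from mvt_simple[OF ab(2) this] obtain z where "z \<in> {a<..<b}" "f b - f a = (b - a) * f' z" by auto
  then show ?thesis using eq ab by auto
qed

lemma lip01:
  fixes f f' :: "real \<Rightarrow> real"
  assumes d: "\<And>x. x \<in> {0..1} \<Longrightarrow> (f has_real_derivative f' x) (at x within {0..1})"
    and bd: "\<And>x. x \<in> {0..1} \<Longrightarrow> \<bar>f' x\<bar> \<le> C"
    and xy: "x \<in> {0..1}" "y \<in> {0..1}"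
  shows "\<bar>f x - f y\<bar> \<le> C * \<bar>x - y\<bar>"
proof -
  have *: "\<bar>f b - f a\<bar> \<le> C * \<bar>b - a\<bar>" if ab: "0 \<le> a" "a \<le> b" "b \<le> 1" for a b
  proof -
    obtain z where z: "z \<in> {a..b}" "f b - f a = f' z * (b - a)" using mvt01[of f f' a b, OF d ab] by blast
    have "\<bar>f' z\<bar> \<le> C" using bd z that by auto
    then have "\<bar>f' z\<bar> * \<bar>b - a\<bar> \<le> C * \<bar>b - a\<bar>" by (rule mult_right_mono) simp
    then show ?thesis using z by (simp add: abs_mult)
  qed
  show ?thesis
  proof (cases "x \<le> y")
    case True then show ?thesis using *[of x y] xy by (simp add: abs_minus_commute)
  next
    case False then show ?thesis using *[of y x] xy by (simp add: abs_minus_commute)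
  qed
qed

lemma hermite:
  fixes u u1 u2 u3 u4 :: "real \<Rightarrow> real"
  assumes d0: "\<And>x. x \<in> {0..1} \<Longrightarrow> (u has_real_derivative u1 x) (at x within {0..1})"
    and d1: "\<And>x. x \<in> {0..1} \<Longrightarrow> (u1 has_real_derivative u2 x) (at x within {0..1})"
    and d2: "\<And>x. x \<in> {0..1} \<Longrightarrow> (u2 has_real_derivative u3 x) (at x within {0..1})"
    and d3: "\<And>x. x \<in> {0..1} \<Longrightarrow> (u3 has_real_derivative u4 x) (at x within {0..1})"
    and bc: "u 0 = 0" "u 1 = 0" "u1 0 = 0" "u1 1 = 0"
    and bd: "\<And>x. x \<in> {0..1} \<Longrightarrow> \<bar>u4 x\<bar> \<le> K"
    and x: "x \<in> {0..1}"
  shows "\<bar>u x\<bar> \<le> K * (x^2 * (1-x)^2) / 24"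
proof (cases "x = 0 \<or> x = 1")
  case True
  have "0 \<le> K" using bd[of 0] by simp
  then show ?thesis using True bc by auto
next
  case False
  then have x0: "0 < x" and x1: "x < 1" using x by auto
  define p where "p s = s^2 * (1-s)^2" for s :: real
  have px: "p x > 0" using x0 x1 by (simp add: p_def)
  define c where "c = u x / p x"
  define g0 where "g0 s = u s - c * p s" for s
  define g1 where "g1 s = u1 s - c * (2 * s - 6 * s ^ 2 + 4 * s ^ 3)" for s
  define g2 where "g2 s = u2 s - c * (2 - 12 * s + 12 * s ^ 2)" for s
  define g3 where "g3 s = u3 s - c * (24 * s - 12)" for s
  define g4 where "g4 s = u4 s - c * 24" for s
  have e0: "(g0 has_real_derivative g1 s) (at s within {0..1})" if "s \<in> {0..1}" for s
    unfolding g0_def g1_def p_def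
    by (rule derivative_eq_intros d0[OF that] refl | simp add: algebra_simps power2_eq_square power3_eq_cube)+
  have e1: "(g1 has_real_derivative g2 s) (at s within {0..1})" if "s \<in> {0..1}" for s
    unfolding g1_def g2_def
    by (rule derivative_eq_intros d1[OF that] refl | simp add: algebra_simps power2_eq_square power3_eq_cube)+
  have e2: "(g2 has_real_derivative g3 s) (at s within {0..1})" if "s \<in> {0..1}" for s
    unfolding g2_def g3_def
    by (rule derivative_eq_intros d2[OF that] refl | simp add: algebra_simps power2_eq_square power3_eq_cube)+
  have e3: "(g3 has_real_derivative g4 s) (at s within {0..1})" if "s \<in> {0..1}" for s
    unfolding g3_def g4_def
    by (rule derivative_eq_intros d3[OF that] refl | simp)+
  have g00: "g0 0 = 0" "g0 x = 0" "g0 1 = 0" using bc px by (auto simp: g0_def p_def c_def)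
  have g10: "g1 0 = 0" "g1 1 = 0" using bc by (auto simp: g1_def)
  obtain a1 where a1: "a1 \<in> {0<..<x}" "g1 a1 = 0"
    using rolle01[OF e0, of 0 x] x0 x1 g00 by auto
  obtain a2 where a2: "a2 \<in> {x<..<1}" "g1 a2 = 0"
    using rolle01[OF e0, of x 1] x0 x1 g00 by auto
  obtain b1 where b1: "b1 \<in> {0<..<a1}" "g2 b1 = 0"
    using rolle01[OF e1, of 0 a1] a1 g10 x1 by auto
  obtain b2 where b2: "b2 \<in> {a1<..<a2}" "g2 b2 = 0"
    using rolle01[OF e1, of a1 a2] a1 a2 by auto
  obtain b3 where b3: "b3 \<in> {a2<..<1}" "g2 b3 = 0"
    using rolle01[OF e1, of a2 1] a1 a2 g10 by auto
  obtain c1 where c1: "c1 \<in> {b1<..<b2}" "g3 c1 = 0"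
    using rolle01[OF e2, of b1 b2] b1 b2 a1 a2 by auto
  obtain c2 where c2: "c2 \<in> {b2<..<b3}" "g3 c2 = 0"
    using rolle01[OF e2, of b2 b3] b2 b3 a1 a2 by auto
  obtain t where t: "t \<in> {c1<..<c2}" "g4 t = 0"
    using rolle01[OF e3, of c1 c2] c1 c2 b1 b2 b3 a1 a2 by auto
  have t01: "t \<in> {0..1}" using t c1 c2 b1 b2 b3 a1 a2 by auto
  have "u4 t = 24 * c" using t by (simp add: g4_def)
  then have "\<bar>24 * c\<bar> \<le> K" using bd[OF t01] by simp
  then have "\<bar>c\<bar> * p x \<le> K / 24 * p x" using px by (intro mult_right_mono) auto
  moreover have "u x = c * p x" using px by (simp add: c_def)
  ultimately show ?thesis using px by (simp add: abs_mult p_def)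
qed

lemma deriv_cont01:
  fixes f f' :: "real \<Rightarrow> real"
  assumes "\<And>x. x \<in> {0..1} \<Longrightarrow> (f has_real_derivative f' x) (at x within {0..1})"
  shows "continuous_on {0..1} f"
  unfolding continuous_on_eq_continuous_within using assms DERIV_continuous by blast

lemma ftc01:
  fixes F f :: "real \<Rightarrow> real"
  assumes ab: "0 \<le> a" "a \<le> b" "b \<le> 1"
    and d: "\<And>x. x \<in> {0..1} \<Longrightarrow> (F has_real_derivative f x) (at x within {0..1})"
  shows "(f has_integral (F b - F a)) {a..b}"
proof (rule fundamental_theorem_of_calculus[OF ab(2)])
  fix x assume x: "x \<in> {a..b}"
  have "(F has_real_derivative f x) (at x within {a..b})"
    using d[of x] x ab by (auto intro: DERIV_subset)
  then show "(F has_vector_derivative f x) (at x within {a..b})"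
    by (simp add: has_real_derivative_iff_has_vector_derivative)
qed

lemma amgm_int:
  fixes f g :: "real \<Rightarrow> real"
  assumes "continuous_on {a..b} f" "continuous_on {a..b} g" "t > 0"
  shows "\<bar>integral {a..b} (\<lambda>s. f s * g s)\<bar> \<le>
     t/2 * integral {a..b} (\<lambda>s. (f s)^2) + 1/(2*t) * integral {a..b} (\<lambda>s. (g s)^2)"
proof -
  have i1: "(\<lambda>s. f s * g s) integrable_on {a..b}"
    by (intro integrable_continuous_interval continuous_intros assms)
  have i2: "(\<lambda>s. (f s)^2) integrable_on {a..b}"
    by (intro integrable_continuous_interval continuous_intros assms)
  have i3: "(\<lambda>s. (g s)^2) integrable_on {a..b}"
    by (intro integrable_continuous_interval continuous_intros assms)
  define G where "G s = t/2 * (f s)^2 + 1/(2*t) * (g s)^2" for s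
  have iG: "G integrable_on {a..b}" unfolding G_def
    by (intro integrable_continuous_interval continuous_intros assms)
  have intG: "integral {a..b} G = t/2 * integral {a..b} (\<lambda>s. (f s)^2) + 1/(2*t) * integral {a..b} (\<lambda>s. (g s)^2)"
  proof -
    have "integral {a..b} G = integral {a..b} (\<lambda>s. t/2 * (f s)^2) + integral {a..b} (\<lambda>s. 1/(2*t) * (g s)^2)"
      unfolding G_def by (rule integral_add; intro integrable_continuous_interval continuous_intros assms)
    then show ?thesis by (simp only: integral_mult_right)
  qed
  have pt: "\<bar>f s * g s\<bar> \<le> G s" for s
  proof -
    have "0 \<le> (t * \<bar>f s\<bar> - \<bar>g s\<bar>)^2" by simp
    then have "2 * t * \<bar>f s * g s\<bar> \<le> t^2 * (f s)^2 + (g s)^2"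
      by (simp add: power2_eq_square algebra_simps abs_mult)
    then have "\<bar>f s * g s\<bar> \<le> (t^2 * (f s)^2 + (g s)^2) / (2 * t)"
      using assms(3) by (simp add: field_simps)
    also have "\<dots> = G s" using assms(3) by (simp add: G_def field_simps power2_eq_square)
    finally show ?thesis .
  qed
  have "integral {a..b} (\<lambda>s. f s * g s) \<le> integral {a..b} G"
    by (rule integral_le[OF i1 iG]) (use pt in \<open>auto simp: abs_le_iff\<close>)
  moreover have "integral {a..b} (\<lambda>s. - (f s * g s)) \<le> integral {a..b} G"
    by (rule integral_le[OF integrable_neg[OF i1] iG]) (use pt in \<open>auto simp: abs_le_iff\<close>)
  ultimately show ?thesis unfolding intG[symmetric] by (simp add: abs_le_iff)
qed

lemma sq_lin_integral:
  fixes c0 c1 :: real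
  assumes that: "a \<le> b"
  shows "((\<lambda>s. (c0 + c1 * s)^2) has_integral
      ((c0^2 * b + c0 * c1 * b^2 + c1^2 * b^3 / 3) - (c0^2 * a + c0 * c1 * a^2 + c1^2 * a^3 / 3))) {a..b}"
proof (rule fundamental_theorem_of_calculus[OF that])
  fix x assume "x \<in> {a..b}"
  show "((\<lambda>s. c0^2 * s + c0 * c1 * s^2 + c1^2 * s^3 / 3) has_vector_derivative (c0 + c1 * x)^2) (at x within {a..b})"
    unfolding has_real_derivative_iff_has_vector_derivative[symmetric]
    by (rule derivative_eq_intros refl | simp add: power2_eq_square power3_eq_cube algebra_simps)+
qed

lemma energy_u1:
  fixes u u1 u2 u3 u4 :: "real \<Rightarrow> real"
  assumes d0: "\<And>x. x \<in> {0..1} \<Longrightarrow> (u has_real_derivative u1 x) (at x within {0..1})"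
    and d1: "\<And>x. x \<in> {0..1} \<Longrightarrow> (u1 has_real_derivative u2 x) (at x within {0..1})"
    and d2: "\<And>x. x \<in> {0..1} \<Longrightarrow> (u2 has_real_derivative u3 x) (at x within {0..1})"
    and d3: "\<And>x. x \<in> {0..1} \<Longrightarrow> (u3 has_real_derivative u4 x) (at x within {0..1})"
    and c4: "continuous_on {0..1} u4"
    and bc: "u 0 = 0" "u 1 = 0" "u1 0 = 0" "u1 1 = 0"
    and bd: "\<And>x. x \<in> {0..1} \<Longrightarrow> \<bar>u4 x\<bar> \<le> K"
    and K: "K > 0"
    and x: "x \<in> {0..1}"
  shows "\<bar>u1 x\<bar> \<le> K / 180 + K / 192"
proof -
  have c0: "continuous_on {0..1} u" by (rule deriv_cont01[OF d0])
  have c1: "continuous_on {0..1} u1" by (rule deriv_cont01[OF d1])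
  have c2: "continuous_on {0..1} u2" by (rule deriv_cont01[OF d2])
  have c3: "continuous_on {0..1} u3" by (rule deriv_cont01[OF d3])
  define E where "E = integral {0..1} (\<lambda>s. (u2 s)^2)"
  have h1: "((\<lambda>s. u2 s * u2 s + u1 s * u3 s) has_integral (u1 1 * u2 1 - u1 0 * u2 0)) {0..1}"
    by (rule ftc01[where F="\<lambda>s. u1 s * u2 s"]) (auto intro!: derivative_eq_intros d1 d2)
  have h2: "((\<lambda>s. u1 s * u3 s + u s * u4 s) has_integral (u 1 * u3 1 - u 0 * u3 0)) {0..1}"
    by (rule ftc01[where F="\<lambda>s. u s * u3 s"]) (auto intro!: derivative_eq_intros d0 d3)
  have i_22: "(\<lambda>s. u2 s * u2 s) integrable_on {0..1}"
    by (intro integrable_continuous_interval continuous_intros c2)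
  have i_13: "(\<lambda>s. u1 s * u3 s) integrable_on {0..1}"
    by (intro integrable_continuous_interval continuous_intros c1 c3)
  have i_04: "(\<lambda>s. u s * u4 s) integrable_on {0..1}"
    by (intro integrable_continuous_interval continuous_intros c0 c4)
  have "integral {0..1} (\<lambda>s. u2 s * u2 s) + integral {0..1} (\<lambda>s. u1 s * u3 s) = 0"
    using integral_unique[OF h1] integral_add[OF i_22 i_13] bc by simp
  moreover have "integral {0..1} (\<lambda>s. u1 s * u3 s) + integral {0..1} (\<lambda>s. u s * u4 s) = 0"
    using integral_unique[OF h2] integral_add[OF i_13 i_04] bc by simp
  ultimately have EE: "E = integral {0..1} (\<lambda>s. u s * u4 s)"
    unfolding E_def by (simp add: power2_eq_square)
  have hp: "((\<lambda>s. K * K / 24 * (s^2 * (1-s)^2)) has_integral K * K / 720) {0..1}"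
  proof -
    have "((\<lambda>s. K * K / 24 * (s^2 * (1-s)^2)) has_integral
        ((\<lambda>s. K * K / 24 * (s^3/3 - s^4/2 + s^5/5)) 1 - (\<lambda>s. K * K / 24 * (s^3/3 - s^4/2 + s^5/5)) 0)) {0..1}"
      by (rule ftc01) (auto intro!: derivative_eq_intros simp: eval_nat_numeral algebra_simps)
    then show ?thesis by simp
  qed
  have "E \<le> integral {0..1} (\<lambda>s. K * K / 24 * (s^2 * (1-s)^2))"
    unfolding EE
  proof (rule integral_le[OF i_04])
    show "(\<lambda>s. K * K / 24 * (s^2 * (1-s)^2)) integrable_on {0..1}" using hp by blast
    fix s :: real assume s: "s \<in> {0..1}"
    have a: "\<bar>u s\<bar> \<le> K * (s^2 * (1-s)^2) / 24"
      by (rule hermite[OF d0 d1 d2 d3 bc bd s])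
    have "u s * u4 s \<le> \<bar>u s\<bar> * \<bar>u4 s\<bar>" by (simp add: abs_mult[symmetric])
    also have "\<dots> \<le> (K * (s^2 * (1-s)^2) / 24) * K"
      by (rule mult_mono[OF a bd[OF s]]) (use K in auto)
    finally show "u s * u4 s \<le> K * K / 24 * (s^2 * (1-s)^2)" by (simp add: field_simps)
  qed
  then have Eb: "E \<le> K * K / 720" using integral_unique[OF hp] by (simp only:)
  define a where "a = 4 * x - 3 * x^2"
  define b where "b = 6 * x^2 - 6 * x"
  have x0: "0 \<le> x" and x1: "x \<le> 1" using x by auto
  have hA: "(u2 has_integral (u1 x - u1 0)) {0..x}"
    by (rule ftc01[OF _ x0 x1 d1]) simp
  have hB: "((\<lambda>s. u2 s * (a + b * s)) has_integral
      ((u1 1 * (a + b * 1) - b * u 1) - (u1 0 * (a + b * 0) - b * u 0))) {0..1}"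
    by (rule ftc01[where F="\<lambda>s. u1 s * (a + b * s) - b * u s"])
      (auto intro!: derivative_eq_intros d0 d1 simp: algebra_simps)
  have iB: "(\<lambda>s. u2 s * (a + b * s)) integrable_on {0..1}"
    by (intro integrable_continuous_interval continuous_intros c2)
  have cB: "continuous_on {0..x} (\<lambda>s. u2 s * (a + b * s))" "continuous_on {x..1} (\<lambda>s. u2 s * (a + b * s))"
    using x0 x1 by (auto intro!: continuous_intros continuous_on_subset[OF c2])
  have c2a: "continuous_on {0..x} u2" "continuous_on {x..1} u2"
    using x0 x1 by (auto intro: continuous_on_subset[OF c2])
  have B0: "integral {0..x} (\<lambda>s. u2 s * (a + b * s)) + integral {x..1} (\<lambda>s. u2 s * (a + b * s)) = 0"
    using Henstock_Kurzweil_Integration.integral_combine[OF x0 x1 iB] integral_unique[OF hB] bc by simp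
  define A1 where "A1 = integral {0..x} (\<lambda>s. u2 s * ((1 - a) + (- b) * s))"
  define A2 where "A2 = integral {x..1} (\<lambda>s. u2 s * ((- a) + (- b) * s))"
  have A1e: "A1 = integral {0..x} u2 - integral {0..x} (\<lambda>s. u2 s * (a + b * s))"
  proof -
    have "A1 = integral {0..x} (\<lambda>s. u2 s - u2 s * (a + b * s))"
      unfolding A1_def by (rule integral_cong) (simp add: algebra_simps)
    also have "\<dots> = integral {0..x} u2 - integral {0..x} (\<lambda>s. u2 s * (a + b * s))"
      by (rule integral_diff) (auto intro!: integrable_continuous_interval c2a cB)
    finally show ?thesis .
  qed
  have A2e: "A2 = - integral {x..1} (\<lambda>s. u2 s * (a + b * s))"
  proof -
    have "A2 = integral {x..1} (\<lambda>s. - (u2 s * (a + b * s)))"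
      unfolding A2_def by (rule integral_cong) (simp add: algebra_simps)
    then show ?thesis by simp
  qed
  have u1x: "u1 x = A1 + A2"
    using A1e A2e B0 integral_unique[OF hA] bc by linarith
  define t where "t = 8 / K"
  have t: "t > 0" using K by (simp add: t_def)
  have bA1: "\<bar>A1\<bar> \<le> t/2 * integral {0..x} (\<lambda>s. (u2 s)^2) + 1/(2*t) * integral {0..x} (\<lambda>s. ((1 - a) + (- b) * s)^2)"
    unfolding A1_def by (rule amgm_int[OF c2a(1) _ t]) (intro continuous_intros)
  have bA2: "\<bar>A2\<bar> \<le> t/2 * integral {x..1} (\<lambda>s. (u2 s)^2) + 1/(2*t) * integral {x..1} (\<lambda>s. ((- a) + (- b) * s)^2)"
    unfolding A2_def by (rule amgm_int[OF c2a(2) _ t]) (intro continuous_intros)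
  have iE: "(\<lambda>s. (u2 s)^2) integrable_on {0..1}"
    by (intro integrable_continuous_interval continuous_intros c2)
  have Esplit: "integral {0..x} (\<lambda>s. (u2 s)^2) + integral {x..1} (\<lambda>s. (u2 s)^2) = E"
    unfolding E_def by (rule Henstock_Kurzweil_Integration.integral_combine[OF x0 x1 iE])
  define D where "D = integral {0..x} (\<lambda>s. ((1 - a) + (- b) * s)^2) + integral {x..1} (\<lambda>s. ((- a) + (- b) * s)^2)"
  have Dv: "D = ((1-a)^2 * x + (1-a) * (-b) * x^2 + (-b)^2 * x^3 / 3)
       + (((-a)^2 * 1 + (-a) * (-b) * 1^2 + (-b)^2 * 1^3 / 3) - ((-a)^2 * x + (-a) * (-b) * x^2 + (-b)^2 * x^3 / 3))"
    unfolding D_def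
    using integral_unique[OF sq_lin_integral[OF x0, of "1-a" "-b"]]
      integral_unique[OF sq_lin_integral[OF x1, of "-a" "-b"]] by simp
  have "D = 1/12 - 3 * (x * (1 - x) - 1/6)^2"
    unfolding Dv a_def b_def by (simp add: power2_eq_square power3_eq_cube field_simps)
  then have Db: "D \<le> 1/12" by simp
  have "\<bar>u1 x\<bar> \<le> \<bar>A1\<bar> + \<bar>A2\<bar>" using u1x by simp
  also have "\<dots> \<le> (t/2 * integral {0..x} (\<lambda>s. (u2 s)^2) + 1/(2*t) * integral {0..x} (\<lambda>s. ((1 - a) + (- b) * s)^2))
      + (t/2 * integral {x..1} (\<lambda>s. (u2 s)^2) + 1/(2*t) * integral {x..1} (\<lambda>s. ((- a) + (- b) * s)^2))"
    using bA1 bA2 by (rule add_mono)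
  also have "\<dots> = t/2 * E + 1/(2*t) * D"
    unfolding D_def Esplit[symmetric] by (simp only: distrib_left add_ac)
  also have "\<dots> \<le> t/2 * (K * K / 720) + 1/(2*t) * (1/12)"
    using Eb Db t by (intro add_mono mult_left_mono) auto
  also have "\<dots> = K / 180 + K / 192" using K by (simp add: t_def field_simps)
  finally show ?thesis .
qed

lemma bounds23:
  fixes u u1 u2 u3 u4 :: "real \<Rightarrow> real"
  assumes d0: "\<And>x. x \<in> {0..1} \<Longrightarrow> (u has_real_derivative u1 x) (at x within {0..1})"
    and d1: "\<And>x. x \<in> {0..1} \<Longrightarrow> (u1 has_real_derivative u2 x) (at x within {0..1})"
    and d2: "\<And>x. x \<in> {0..1} \<Longrightarrow> (u2 has_real_derivative u3 x) (at x within {0..1})"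
    and d3: "\<And>x. x \<in> {0..1} \<Longrightarrow> (u3 has_real_derivative u4 x) (at x within {0..1})"
    and bc: "u 0 = 0" "u 1 = 0" "u1 0 = 0" "u1 1 = 0"
    and bd: "\<And>x. x \<in> {0..1} \<Longrightarrow> \<bar>u4 x\<bar> \<le> K"
    and x: "x \<in> {0..1}"
  shows "\<bar>u3 x\<bar> \<le> K \<and> \<bar>u2 x\<bar> \<le> K"
proof -
  obtain p where p: "p \<in> {0<..<1}" "u1 p = 0" using rolle01[OF d0, of 0 1] bc by auto
  obtain q1 where q1: "q1 \<in> {0<..<p}" "u2 q1 = 0" using rolle01[OF d1, of 0 p] bc p by auto
  obtain q2 where q2: "q2 \<in> {p<..<1}" "u2 q2 = 0" using rolle01[OF d1, of p 1] bc p by auto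
  obtain r where r: "r \<in> {q1<..<q2}" "u3 r = 0" using rolle01[OF d2, of q1 q2] q1 q2 p by auto
  have r01: "r \<in> {0..1}" and q01: "q1 \<in> {0..1}" using r q1 q2 p by auto
  have l3: "\<bar>u3 y - u3 r\<bar> \<le> K * \<bar>y - r\<bar>" if "y \<in> {0..1}" for y
    by (rule lip01[OF d3 bd that r01])
  have K0: "0 \<le> K" using bd[of 0] by simp
  have b3: "\<bar>u3 y\<bar> \<le> K" if y: "y \<in> {0..1}" for y
  proof -
    have "\<bar>y - r\<bar> \<le> 1" using y r01 by auto
    then have "K * \<bar>y - r\<bar> \<le> K" using K0 by (simp add: mult_left_le)
    then show ?thesis using l3[OF y] r by simp
  qed
  have "\<bar>u2 x - u2 q1\<bar> \<le> K * \<bar>x - q1\<bar>" by (rule lip01[OF d2 b3 x q01])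
  moreover have "\<bar>x - q1\<bar> \<le> 1" using x q01 by auto
  then have "K * \<bar>x - q1\<bar> \<le> K" using K0 by (simp add: mult_left_le)
  ultimately have "\<bar>u2 x\<bar> \<le> K" using q1 by simp
  then show ?thesis using b3[OF x] by simp
qed

lemma apriori:
  fixes u u1 u2 u3 u4 :: "real \<Rightarrow> real"
  assumes d0: "\<And>x. x \<in> {0..1} \<Longrightarrow> (u has_real_derivative u1 x) (at x within {0..1})"
    and d1: "\<And>x. x \<in> {0..1} \<Longrightarrow> (u1 has_real_derivative u2 x) (at x within {0..1})"
    and d2: "\<And>x. x \<in> {0..1} \<Longrightarrow> (u2 has_real_derivative u3 x) (at x within {0..1})"
    and d3: "\<And>x. x \<in> {0..1} \<Longrightarrow> (u3 has_real_derivative u4 x) (at x within {0..1})"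
    and c4: "continuous_on {0..1} u4"
    and bc: "u 0 = 0" "u 1 = 0" "u1 0 = 0" "u1 1 = 0"
    and bd: "\<And>x. x \<in> {0..1} \<Longrightarrow> \<bar>u4 x\<bar> \<le> M / 2"
    and M: "M > 0"
    and x: "x \<in> {0..1}"
  shows "(x, u x, u1 x, u2 x, u3 x) \<in> D_M M"
proof -
  have K: "M / 2 > 0" using M by simp
  have h: "\<bar>u x\<bar> \<le> M / 2 * (x^2 * (1-x)^2) / 24" by (rule hermite[OF d0 d1 d2 d3 bc bd x])
  have xx: "x^2 * (1-x)^2 \<le> 1/16"
  proof -
    have "0 \<le> x * (1 - x)" using x by auto
    moreover have "x * (1 - x) \<le> 1/4"
    proof -
      have "0 \<le> (x - 1/2)^2" by simp
      then show ?thesis by (simp add: power2_eq_square algebra_simps)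
    qed
    ultimately have "(x * (1 - x))^2 \<le> (1/4)^2" by (intro power_mono) auto
    moreover have "(x * (1 - x))^2 = x^2 * (1-x)^2" by (simp add: power_mult_distrib)
    moreover have "(1/4::real)^2 = 1/16" by (simp add: power2_eq_square)
    ultimately show ?thesis by linarith
  qed
  have "M / 2 * (x^2 * (1-x)^2) / 24 \<le> M / 2 * (1/16) / 24"
    using xx M by (intro divide_right_mono mult_left_mono) auto
  then have b0: "\<bar>u x\<bar> \<le> M / 384" using h by simp
  have b1': "\<bar>u1 x\<bar> \<le> M / 2 / 180 + M / 2 / 192" by (rule energy_u1[OF d0 d1 d2 d3 c4 bc bd K x])
  have s3: "sqrt 3 \<le> 2" by (rule real_le_lsqrt) auto
  have "M / 2 / 180 + M / 2 / 192 \<le> M / (72 * sqrt 3)"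
  proof -
    have "M / (72 * 2) \<le> M / (72 * sqrt 3)" using s3 M by (intro divide_left_mono) auto
    moreover have "M / 2 / 180 + M / 2 / 192 \<le> M / (72 * 2)" using M by simp
    ultimately show ?thesis by linarith
  qed
  then have b1: "\<bar>u1 x\<bar> \<le> M / (72 * sqrt 3)" using b1' by linarith
  have b23: "\<bar>u3 x\<bar> \<le> M / 2 \<and> \<bar>u2 x\<bar> \<le> M / 2" by (rule bounds23[OF d0 d1 d2 d3 bc bd x])
  show ?thesis unfolding D_M_def using x b0 b1 b23 M by auto
qed

definition hat :: "real \<Rightarrow> real" where "hat s = max 0 (1 - \<bar>s\<bar>)"

definition Hs :: "nat \<Rightarrow> (nat \<Rightarrow> real) \<Rightarrow> real \<Rightarrow> real" where
  "Hs n d x = (\<Sum>k\<le>n. d k * hat (real n * x - real k))"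

lemma hat_nonneg: "0 \<le> hat s" by (simp add: hat_def)
lemma hat_le1: "hat s \<le> 1" by (simp add: hat_def)
lemma hat_zero: "1 \<le> \<bar>s\<bar> \<Longrightarrow> hat s = 0" by (simp add: hat_def)
lemma hat_pos: "hat s \<noteq> 0 \<Longrightarrow> \<bar>s\<bar> < 1" by (auto simp: hat_def max_def split: if_splits)

lemma continuous_hat: "continuous_on S (\<lambda>x. hat (f x))" if "continuous_on S f"
  unfolding hat_def by (intro continuous_intros that)

lemma partition_unity:
  fixes n :: nat and x :: real
  assumes n: "n > 0" and x: "x \<in> {0..1}"
  shows "(\<Sum>k\<le>n. hat (real n * x - real k)) = 1"
proof -
  define y where "y = real n * x"
  have y0: "0 \<le> y" and yn: "y \<le> real n" using x n by (auto simp: y_def mult_left_le)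
  define j where "j = nat \<lfloor>y\<rfloor>"
  have jy: "real j \<le> y" "y < real j + 1" using y0 by (auto simp: j_def)
  show ?thesis
  proof (cases "j < n")
    case True
    have z: "hat (y - real k) = 0" if "k \<notin> {j, Suc j}" for k
    proof (rule hat_zero)
      show "1 \<le> \<bar>y - real k\<bar>"
      proof (cases "k < j")
        case True then have "real k + 1 \<le> real j" by linarith
        then show ?thesis using jy by simp
      next
        case False then have "Suc j < k" using that by auto
        then have "real j + 2 \<le> real k" by linarith
        then show ?thesis using jy by simp
      qed
    qed
    have "(\<Sum>k\<le>n. hat (y - real k)) = (\<Sum>k\<in>{j, Suc j}. hat (y - real k))"
      by (rule sum.mono_neutral_right) (use True z in auto)
    also have "\<dots> = hat (y - real j) + hat (y - real (Suc j))" by simp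
    also have "\<dots> = 1" using jy by (simp add: hat_def)
    finally show ?thesis by (simp add: y_def)
  next
    case False
    then have yn': "y = real n" using jy yn by linarith
    have z: "hat (y - real k) = 0" if "k \<noteq> n" "k \<le> n" for k
      by (rule hat_zero) (use that yn' in auto)
    have "(\<Sum>k\<le>n. hat (y - real k)) = (\<Sum>k\<in>{n}. hat (y - real k))"
      by (rule sum.mono_neutral_right) (use z in auto)
    also have "\<dots> = 1" using yn' by (simp add: hat_def)
    finally show ?thesis by (simp add: y_def)
  qed
qed

lemma Hs_cont: "continuous_on S (Hs n d)"
  unfolding Hs_def by (intro continuous_intros continuous_hat)

lemma Hs_convex:
  assumes n: "n > 0" and x: "x \<in> {0..1}"
    and h: "\<And>k. k \<le> n \<Longrightarrow> \<bar>real n * x - real k\<bar> < 1 \<Longrightarrow> \<bar>d k - v\<bar> \<le> e"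
  shows "\<bar>Hs n d x - v\<bar> \<le> e"
proof -
  have pu: "(\<Sum>k\<le>n. hat (real n * x - real k)) = 1" by (rule partition_unity[OF n x])
  have "Hs n d x - v = (\<Sum>k\<le>n. (d k - v) * hat (real n * x - real k))"
    unfolding Hs_def using pu by (simp add: algebra_simps sum_subtractf sum_distrib_left[symmetric])
  also have "\<bar>\<dots>\<bar> \<le> (\<Sum>k\<le>n. \<bar>(d k - v) * hat (real n * x - real k)\<bar>)" by (rule sum_abs)
  also have "\<dots> \<le> (\<Sum>k\<le>n. e * hat (real n * x - real k))"
  proof (rule sum_mono)
    fix k assume k: "k \<in> {..n}"
    show "\<bar>(d k - v) * hat (real n * x - real k)\<bar> \<le> e * hat (real n * x - real k)"
    proof (cases "hat (real n * x - real k) = 0")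
      case True then show ?thesis by simp
    next
      case False
      then have "\<bar>d k - v\<bar> \<le> e" using h hat_pos k by auto
      then show ?thesis by (simp add: abs_mult hat_nonneg mult_right_mono)
    qed
  qed
  also have "\<dots> = e" using pu by (simp add: sum_distrib_left[symmetric])
  finally show ?thesis .
qed

lemma Hs_bound:
  assumes n: "n > 0" and x: "x \<in> {0..1}" and h: "\<And>k. k \<le> n \<Longrightarrow> \<bar>d k\<bar> \<le> B"
  shows "\<bar>Hs n d x\<bar> \<le> B"
  using Hs_convex[OF n x, of d 0 B] h by simp

lemma Hs_diff:
  "\<bar>Hs n d x - Hs n d' x\<bar> \<le> (\<Sum>k\<le>n. \<bar>d k - d' k\<bar>)"
proof -
  have "Hs n d x - Hs n d' x = (\<Sum>k\<le>n. (d k - d' k) * hat (real n * x - real k))"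
    unfolding Hs_def by (simp add: algebra_simps sum_subtractf)
  also have "\<bar>\<dots>\<bar> \<le> (\<Sum>k\<le>n. \<bar>(d k - d' k) * hat (real n * x - real k)\<bar>)" by (rule sum_abs)
  also have "\<dots> \<le> (\<Sum>k\<le>n. \<bar>d k - d' k\<bar>)"
    by (rule sum_mono) (simp add: abs_mult hat_nonneg hat_le1 mult_left_le)
  finally show ?thesis .
qed

lemma Hs_prefix:
  assumes "\<And>i. i \<le> k \<Longrightarrow> d i = d' i" and "real n * x \<le> real k"
  shows "Hs n d x = Hs n d' x"
  unfolding Hs_def
proof (rule sum.cong[OF refl])
  fix i assume "i \<in> {..n}"
  show "d i * hat (real n * x - real i) = d' i * hat (real n * x - real i)"
  proof (cases "i \<le> k")
    case True then show ?thesis using assms by simp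
  next
    case False
    then have "real k + 1 \<le> real i" by linarith
    then have "hat (real n * x - real i) = 0" using assms(2) by (intro hat_zero) simp
    then show ?thesis by simp
  qed
qed

lemma int_deriv01:
  fixes f :: "real \<Rightarrow> real"
  assumes "continuous_on {0..1} f" "x \<in> {0..1}"
  shows "((\<lambda>x. integral {0..x} f) has_real_derivative f x) (at x within {0..1})"
  by (rule integral_has_real_derivative[OF assms])

lemma int_cont01:
  fixes f :: "real \<Rightarrow> real"
  assumes "continuous_on {0..1} f"
  shows "continuous_on {0..1} (\<lambda>x. integral {0..x} f)"
  by (rule deriv_cont01) (rule int_deriv01[OF assms])

lemma int_diff_bound:
  fixes f g :: "real \<Rightarrow> real"
  assumes cf: "continuous_on {0..1} f" and cg: "continuous_on {0..1} g"
    and b: "\<And>s. s \<in> {0..1} \<Longrightarrow> \<bar>f s - g s\<bar> \<le> \<eta>"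
    and x: "x \<in> {0..1}"
  shows "\<bar>integral {0..x} f - integral {0..x} g\<bar> \<le> \<eta>"
proof -
  have sub: "{0..x} \<subseteq> {0..1}" using x by auto
  have eta: "0 \<le> \<eta>" using b[of 0] by simp
  have if': "f integrable_on {0..x}" "g integrable_on {0..x}"
    by (auto intro!: integrable_continuous_interval continuous_on_subset[OF cf sub] continuous_on_subset[OF cg sub])
  have ifg: "(\<lambda>s. f s - g s) integrable_on {0..x}" using if' by (rule integrable_diff)
  have e1: "integral {0..x} (\<lambda>s. f s - g s) \<le> integral {0..x} (\<lambda>s. \<eta>)"
    by (rule integral_le[OF ifg]) (use b sub in \<open>auto simp: abs_le_iff\<close>)
  have e2: "integral {0..x} (\<lambda>s. - (f s - g s)) \<le> integral {0..x} (\<lambda>s. \<eta>)"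
    by (rule integral_le[OF integrable_neg[OF ifg]]) (use b sub in \<open>auto simp: abs_le_iff\<close>)
  have e3: "integral {0..x} (\<lambda>s. \<eta>) \<le> \<eta>" using x eta by (simp add: mult_left_le_one_le)
  have eq: "integral {0..x} f - integral {0..x} g = integral {0..x} (\<lambda>s. f s - g s)"
    by (rule integral_diff[symmetric, OF if'])
  have en: "integral {0..x} (\<lambda>s. -(f s - g s)) = - integral {0..x} (\<lambda>s. f s - g s)" by (rule integral_neg)
  show ?thesis unfolding abs_le_iff using e1 e2 e3 eq en by linarith
qed

lemma int_bound:
  fixes f :: "real \<Rightarrow> real"
  assumes cf: "continuous_on {0..1} f"
    and b: "\<And>s. s \<in> {0..1} \<Longrightarrow> \<bar>f s\<bar> \<le> \<eta>"
    and x: "x \<in> {0..1}"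
  shows "\<bar>integral {0..x} f\<bar> \<le> \<eta>"
  using int_diff_bound[OF cf continuous_on_const[of _ 0], of \<eta> x] b x by simp

definition Z3 :: "nat \<Rightarrow> (nat \<Rightarrow> real) \<Rightarrow> real \<Rightarrow> real" where "Z3 n d x = integral {0..x} (Hs n d)"
definition Z2 :: "nat \<Rightarrow> (nat \<Rightarrow> real) \<Rightarrow> real \<Rightarrow> real" where "Z2 n d x = integral {0..x} (Z3 n d)"
definition Z1 :: "nat \<Rightarrow> (nat \<Rightarrow> real) \<Rightarrow> real \<Rightarrow> real" where "Z1 n d x = integral {0..x} (Z2 n d)"
definition Z0 :: "nat \<Rightarrow> (nat \<Rightarrow> real) \<Rightarrow> real \<Rightarrow> real" where "Z0 n d x = integral {0..x} (Z1 n d)"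

lemma Z3_cont: "continuous_on {0..1} (Z3 n d)"
  unfolding Z3_def[abs_def] by (rule int_cont01[OF Hs_cont])
lemma Z2_cont: "continuous_on {0..1} (Z2 n d)"
  unfolding Z2_def[abs_def] by (rule int_cont01[OF Z3_cont])
lemma Z1_cont: "continuous_on {0..1} (Z1 n d)"
  unfolding Z1_def[abs_def] by (rule int_cont01[OF Z2_cont])

lemma Z3_deriv: "x \<in> {0..1} \<Longrightarrow> (Z3 n d has_real_derivative Hs n d x) (at x within {0..1})"
  unfolding Z3_def[abs_def] by (rule int_deriv01[OF Hs_cont])
lemma Z2_deriv: "x \<in> {0..1} \<Longrightarrow> (Z2 n d has_real_derivative Z3 n d x) (at x within {0..1})"
  unfolding Z2_def[abs_def] by (rule int_deriv01[OF Z3_cont])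
lemma Z1_deriv: "x \<in> {0..1} \<Longrightarrow> (Z1 n d has_real_derivative Z2 n d x) (at x within {0..1})"
  unfolding Z1_def[abs_def] by (rule int_deriv01[OF Z2_cont])
lemma Z0_deriv: "x \<in> {0..1} \<Longrightarrow> (Z0 n d has_real_derivative Z1 n d x) (at x within {0..1})"
  unfolding Z0_def[abs_def] by (rule int_deriv01[OF Z1_cont])

lemma Z_at0: "Z3 n d 0 = 0" "Z2 n d 0 = 0" "Z1 n d 0 = 0" "Z0 n d 0 = 0"
  by (simp_all add: Z3_def Z2_def Z1_def Z0_def)

definition sdiff :: "nat \<Rightarrow> (nat \<Rightarrow> real) \<Rightarrow> (nat \<Rightarrow> real) \<Rightarrow> real" where
  "sdiff n d d' = (\<Sum>k\<le>n. \<bar>d k - d' k\<bar>)"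

lemma Z_diff:
  assumes x: "x \<in> {0..1}"
  shows "\<bar>Z3 n d x - Z3 n d' x\<bar> \<le> sdiff n d d'" "\<bar>Z2 n d x - Z2 n d' x\<bar> \<le> sdiff n d d'"
        "\<bar>Z1 n d x - Z1 n d' x\<bar> \<le> sdiff n d d'" "\<bar>Z0 n d x - Z0 n d' x\<bar> \<le> sdiff n d d'"
proof -
  have h3: "\<bar>Z3 n d s - Z3 n d' s\<bar> \<le> sdiff n d d'" if "s \<in> {0..1}" for s
    unfolding Z3_def sdiff_def by (rule int_diff_bound[OF Hs_cont Hs_cont Hs_diff that])
  have h2: "\<bar>Z2 n d s - Z2 n d' s\<bar> \<le> sdiff n d d'" if "s \<in> {0..1}" for s
    unfolding Z2_def by (rule int_diff_bound[OF Z3_cont Z3_cont h3 that])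
  have h1: "\<bar>Z1 n d s - Z1 n d' s\<bar> \<le> sdiff n d d'" if "s \<in> {0..1}" for s
    unfolding Z1_def by (rule int_diff_bound[OF Z2_cont Z2_cont h2 that])
  have h0: "\<bar>Z0 n d s - Z0 n d' s\<bar> \<le> sdiff n d d'" if "s \<in> {0..1}" for s
    unfolding Z0_def by (rule int_diff_bound[OF Z1_cont Z1_cont h1 that])
  show "\<bar>Z3 n d x - Z3 n d' x\<bar> \<le> sdiff n d d'" "\<bar>Z2 n d x - Z2 n d' x\<bar> \<le> sdiff n d d'"
        "\<bar>Z1 n d x - Z1 n d' x\<bar> \<le> sdiff n d d'" "\<bar>Z0 n d x - Z0 n d' x\<bar> \<le> sdiff n d d'"
    using h0 h1 h2 h3 x by auto
qed

lemma Z_bound: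
  assumes n: "n > 0" and x: "x \<in> {0..1}" and b: "\<And>k. k \<le> n \<Longrightarrow> \<bar>d k\<bar> \<le> B"
  shows "\<bar>Z3 n d x\<bar> \<le> B" "\<bar>Z2 n d x\<bar> \<le> B" "\<bar>Z1 n d x\<bar> \<le> B" "\<bar>Z0 n d x\<bar> \<le> B"
proof -
  have hH: "\<bar>Hs n d s\<bar> \<le> B" if "s \<in> {0..1}" for s by (rule Hs_bound[OF n that b])
  have h3: "\<bar>Z3 n d s\<bar> \<le> B" if "s \<in> {0..1}" for s
    unfolding Z3_def by (rule int_bound[OF Hs_cont hH that])
  have h2: "\<bar>Z2 n d s\<bar> \<le> B" if "s \<in> {0..1}" for s
    unfolding Z2_def by (rule int_bound[OF Z3_cont h3 that])
  have h1: "\<bar>Z1 n d s\<bar> \<le> B" if "s \<in> {0..1}" for s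
    unfolding Z1_def by (rule int_bound[OF Z2_cont h2 that])
  have h0: "\<bar>Z0 n d s\<bar> \<le> B" if "s \<in> {0..1}" for s
    unfolding Z0_def by (rule int_bound[OF Z1_cont h1 that])
  show "\<bar>Z3 n d x\<bar> \<le> B" "\<bar>Z2 n d x\<bar> \<le> B" "\<bar>Z1 n d x\<bar> \<le> B" "\<bar>Z0 n d x\<bar> \<le> B"
    using h0 h1 h2 h3 x by auto
qed

lemma Z_prefix:
  assumes eq: "\<And>i. i \<le> k \<Longrightarrow> d i = d' i" and x: "x \<in> {0..1}" and nk: "real n * x \<le> real k"
  shows "Z3 n d x = Z3 n d' x \<and> Z2 n d x = Z2 n d' x \<and> Z1 n d x = Z1 n d' x \<and> Z0 n d x = Z0 n d' x"
proof -
  have S: "s \<in> {0..1} \<and> real n * s \<le> real k" if "s \<in> {0..x}" for s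
  proof -
    have "real n * s \<le> real n * x" using that by (intro mult_left_mono) auto
    then show ?thesis using that x nk by auto
  qed
  have h3: "Z3 n d y = Z3 n d' y" if "y \<in> {0..1}" "real n * y \<le> real k" for y
    unfolding Z3_def
  proof (rule integral_cong)
    fix s assume "s \<in> {0..y}"
    moreover have "real n * s \<le> real n * y" using calculation by (intro mult_left_mono) auto
    ultimately show "Hs n d s = Hs n d' s" using that by (intro Hs_prefix[OF eq]) auto
  qed
  have h2: "Z2 n d y = Z2 n d' y" if "y \<in> {0..1}" "real n * y \<le> real k" for y
    unfolding Z2_def
  proof (rule integral_cong)
    fix s assume "s \<in> {0..y}"
    moreover have "real n * s \<le> real n * y" using calculation by (intro mult_left_mono) auto
    ultimately show "Z3 n d s = Z3 n d' s" using that by (intro h3) auto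
  qed
  have h1: "Z1 n d y = Z1 n d' y" if "y \<in> {0..1}" "real n * y \<le> real k" for y
    unfolding Z1_def
  proof (rule integral_cong)
    fix s assume "s \<in> {0..y}"
    moreover have "real n * s \<le> real n * y" using calculation by (intro mult_left_mono) auto
    ultimately show "Z2 n d s = Z2 n d' s" using that by (intro h2) auto
  qed
  have h0: "Z0 n d y = Z0 n d' y" if "y \<in> {0..1}" "real n * y \<le> real k" for y
    unfolding Z0_def
  proof (rule integral_cong)
    fix s assume "s \<in> {0..y}"
    moreover have "real n * s \<le> real n * y" using calculation by (intro mult_left_mono) auto
    ultimately show "Z1 n d s = Z1 n d' s" using that by (intro h1) auto
  qed
  show ?thesis using h0 h1 h2 h3 x nk by auto
qed

definition Us0 :: "nat \<Rightarrow> real \<Rightarrow> real \<Rightarrow> (nat \<Rightarrow> real) \<Rightarrow> real \<Rightarrow> real" where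
  "Us0 n a b d x = a * x^2 / 2 + b * x^3 / 6 + Z0 n d x"
definition Us1 :: "nat \<Rightarrow> real \<Rightarrow> real \<Rightarrow> (nat \<Rightarrow> real) \<Rightarrow> real \<Rightarrow> real" where
  "Us1 n a b d x = a * x + b * x^2 / 2 + Z1 n d x"
definition Us2 :: "nat \<Rightarrow> real \<Rightarrow> real \<Rightarrow> (nat \<Rightarrow> real) \<Rightarrow> real \<Rightarrow> real" where
  "Us2 n a b d x = a + b * x + Z2 n d x"
definition Us3 :: "nat \<Rightarrow> real \<Rightarrow> real \<Rightarrow> (nat \<Rightarrow> real) \<Rightarrow> real \<Rightarrow> real" where
  "Us3 n a b d x = b + Z3 n d x"

lemma Us_deriv:
  assumes "x \<in> {0..1}"
  shows "(Us0 n a b d has_real_derivative Us1 n a b d x) (at x within {0..1})"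
    "(Us1 n a b d has_real_derivative Us2 n a b d x) (at x within {0..1})"
    "(Us2 n a b d has_real_derivative Us3 n a b d x) (at x within {0..1})"
    "(Us3 n a b d has_real_derivative Hs n d x) (at x within {0..1})"
  unfolding Us0_def[abs_def] Us1_def[abs_def] Us2_def[abs_def] Us3_def[abs_def]
  by (rule derivative_eq_intros Z0_deriv Z1_deriv Z2_deriv Z3_deriv assms refl
      | simp add: power2_eq_square power3_eq_cube algebra_simps)+

lemma Us_at0: "Us0 n a b d 0 = 0" "Us1 n a b d 0 = 0" "Us2 n a b d 0 = a" "Us3 n a b d 0 = b"
  by (simp_all add: Us0_def Us1_def Us2_def Us3_def Z_at0)

lemma Us_diff:
  assumes x: "x \<in> {0..1}"
  shows "\<bar>Us0 n a b d x - Us0 n a' b' d' x\<bar> \<le> \<bar>a - a'\<bar> + \<bar>b - b'\<bar> + sdiff n d d'"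
    "\<bar>Us1 n a b d x - Us1 n a' b' d' x\<bar> \<le> \<bar>a - a'\<bar> + \<bar>b - b'\<bar> + sdiff n d d'"
    "\<bar>Us2 n a b d x - Us2 n a' b' d' x\<bar> \<le> \<bar>a - a'\<bar> + \<bar>b - b'\<bar> + sdiff n d d'"
    "\<bar>Us3 n a b d x - Us3 n a' b' d' x\<bar> \<le> \<bar>a - a'\<bar> + \<bar>b - b'\<bar> + sdiff n d d'"
proof -
  have x0: "0 \<le> x" and x1: "x \<le> 1" using x by auto
  have p1: "\<bar>x\<bar> \<le> 1" "\<bar>x^2\<bar> \<le> 1" "\<bar>x^3\<bar> \<le> 1" using x0 x1 by (auto simp: power_le_one)
  have m: "\<bar>c * y\<bar> \<le> \<bar>c\<bar>" if "\<bar>y\<bar> \<le> 1" for c y :: real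
    using that by (simp add: abs_mult mult_left_le)
  note zd = Z_diff[OF x, of n d d']
  have t1: "\<bar>A / 2 + B / 6 + C\<bar> \<le> \<alpha> + \<beta> + \<gamma>" if "\<bar>A\<bar> \<le> \<alpha>" "\<bar>B\<bar> \<le> \<beta>" "\<bar>C\<bar> \<le> \<gamma>" for A B C \<alpha> \<beta> \<gamma> :: real
    using that by (simp add: abs_le_iff; linarith)
  have t2: "\<bar>A + B / 2 + C\<bar> \<le> \<alpha> + \<beta> + \<gamma>" if "\<bar>A\<bar> \<le> \<alpha>" "\<bar>B\<bar> \<le> \<beta>" "\<bar>C\<bar> \<le> \<gamma>" for A B C \<alpha> \<beta> \<gamma> :: real
    using that by (simp add: abs_le_iff; linarith)
  have t3: "\<bar>A + B + C\<bar> \<le> \<alpha> + \<beta> + \<gamma>" if "\<bar>A\<bar> \<le> \<alpha>" "\<bar>B\<bar> \<le> \<beta>" "\<bar>C\<bar> \<le> \<gamma>" for A B C \<alpha> \<beta> \<gamma> :: real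
    using that by (simp add: abs_le_iff; linarith)
  have t4: "\<bar>B + C\<bar> \<le> \<alpha> + \<beta> + \<gamma>" if "0 \<le> \<alpha>" "\<bar>B\<bar> \<le> \<beta>" "\<bar>C\<bar> \<le> \<gamma>" for B C \<alpha> \<beta> \<gamma> :: real
    using that by (simp add: abs_le_iff; linarith)
  have "Us0 n a b d x - Us0 n a' b' d' x = ((a - a') * x^2) / 2 + ((b - b') * x^3) / 6 + (Z0 n d x - Z0 n d' x)"
    by (simp add: Us0_def field_simps)
  then show "\<bar>Us0 n a b d x - Us0 n a' b' d' x\<bar> \<le> \<bar>a - a'\<bar> + \<bar>b - b'\<bar> + sdiff n d d'"
    using t1[OF m[OF p1(2)] m[OF p1(3)] zd(4)] by simp
  have "Us1 n a b d x - Us1 n a' b' d' x = ((a - a') * x) + ((b - b') * x^2) / 2 + (Z1 n d x - Z1 n d' x)"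
    by (simp add: Us1_def field_simps)
  then show "\<bar>Us1 n a b d x - Us1 n a' b' d' x\<bar> \<le> \<bar>a - a'\<bar> + \<bar>b - b'\<bar> + sdiff n d d'"
    using t2[OF m[OF p1(1)] m[OF p1(2)] zd(3)] by simp
  have "Us2 n a b d x - Us2 n a' b' d' x = (a - a') + ((b - b') * x) + (Z2 n d x - Z2 n d' x)"
    by (simp add: Us2_def algebra_simps)
  then show "\<bar>Us2 n a b d x - Us2 n a' b' d' x\<bar> \<le> \<bar>a - a'\<bar> + \<bar>b - b'\<bar> + sdiff n d d'"
    using t3[OF order_refl m[OF p1(1)] zd(2)] by simp
  have "Us3 n a b d x - Us3 n a' b' d' x = (b - b') + (Z3 n d x - Z3 n d' x)"
    by (simp add: Us3_def algebra_simps)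
  then show "\<bar>Us3 n a b d x - Us3 n a' b' d' x\<bar> \<le> \<bar>a - a'\<bar> + \<bar>b - b'\<bar> + sdiff n d d'"
    using t4[OF abs_ge_zero order_refl zd(1)] by simp
qed

definition UC5 :: "(real \<Rightarrow> real \<Rightarrow> real \<Rightarrow> real \<Rightarrow> real \<Rightarrow> real) \<Rightarrow> bool" where
  "UC5 F \<longleftrightarrow> (\<forall>e>0. \<exists>\<delta>>0. \<forall>x a b c d x' a' b' c' d'. \<bar>x - x'\<bar> < \<delta> \<longrightarrow> \<bar>a - a'\<bar> < \<delta> \<longrightarrow>
      \<bar>b - b'\<bar> < \<delta> \<longrightarrow> \<bar>c - c'\<bar> < \<delta> \<longrightarrow> \<bar>d - d'\<bar> < \<delta> \<longrightarrow> \<bar>F x a b c d - F x' a' b' c' d'\<bar> < e)"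

lemma UC5_tendsto:
  assumes UC: "UC5 F"
    and X: "(X \<longlongrightarrow> x0) G" and A: "(A \<longlongrightarrow> a0) G" and B: "(B \<longlongrightarrow> b0) G"
    and C: "(C \<longlongrightarrow> c0) G" and E: "(E \<longlongrightarrow> e0) G"
  shows "((\<lambda>p. F (X p) (A p) (B p) (C p) (E p)) \<longlongrightarrow> F x0 a0 b0 c0 e0) G"
proof (rule tendstoI)
  fix e :: real assume e: "e > 0"
  obtain \<delta> where \<delta>: "\<delta> > 0" and h: "\<And>x a b c d x' a' b' c' d'. \<bar>x - x'\<bar> < \<delta> \<Longrightarrow> \<bar>a - a'\<bar> < \<delta> \<Longrightarrow>
      \<bar>b - b'\<bar> < \<delta> \<Longrightarrow> \<bar>c - c'\<bar> < \<delta> \<Longrightarrow> \<bar>d - d'\<bar> < \<delta> \<Longrightarrow> \<bar>F x a b c d - F x' a' b' c' d'\<bar> < e"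
    using UC e unfolding UC5_def by metis
  have ev: "\<forall>\<^sub>F p in G. dist (X p) x0 < \<delta> \<and> dist (A p) a0 < \<delta> \<and> dist (B p) b0 < \<delta> \<and> dist (C p) c0 < \<delta> \<and> dist (E p) e0 < \<delta>"
    using tendstoD[OF X \<delta>] tendstoD[OF A \<delta>] tendstoD[OF B \<delta>] tendstoD[OF C \<delta>] tendstoD[OF E \<delta>]
    by (intro eventually_conj)
  show "\<forall>\<^sub>F p in G. dist (F (X p) (A p) (B p) (C p) (E p)) (F x0 a0 b0 c0 e0) < e"
    by (rule eventually_mono[OF ev]) (auto simp: dist_real_def intro!: h)
qed

lemma bound_tendsto:
  fixes g :: "'a \<Rightarrow> real"
  assumes "\<And>p. \<bar>g p - g0\<bar> \<le> h p" and "(h \<longlongrightarrow> 0) G"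
  shows "(g \<longlongrightarrow> g0) G"
proof -
  have "((\<lambda>p. g p - g0) \<longlongrightarrow> 0) G"
    by (rule Lim_null_comparison[OF _ assms(2)]) (use assms(1) in auto)
  then show ?thesis by (simp add: Lim_null[of g g0])
qed

definition tk :: "nat \<Rightarrow> nat \<Rightarrow> real" where "tk n k = real (min k n) / real n"

lemma tk01: "n > 0 \<Longrightarrow> tk n k \<in> {0..1}"
  by (auto simp: tk_def divide_le_eq_1)

primrec Dr :: "(real \<Rightarrow> real \<Rightarrow> real \<Rightarrow> real \<Rightarrow> real \<Rightarrow> real) \<Rightarrow> nat \<Rightarrow> real \<Rightarrow> real \<Rightarrow> nat \<Rightarrow> nat \<Rightarrow> real" where
  "Dr F n a b 0 = (\<lambda>_. F 0 0 0 a b)"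
| "Dr F n a b (Suc k) = (Dr F n a b k)(Suc k := F (tk n k) (Us0 n a b (Dr F n a b k) (tk n k))
      (Us1 n a b (Dr F n a b k) (tk n k)) (Us2 n a b (Dr F n a b k) (tk n k)) (Us3 n a b (Dr F n a b k) (tk n k)))"

definition dd :: "(real \<Rightarrow> real \<Rightarrow> real \<Rightarrow> real \<Rightarrow> real \<Rightarrow> real) \<Rightarrow> nat \<Rightarrow> real \<Rightarrow> real \<Rightarrow> nat \<Rightarrow> real" where
  "dd F n a b k = Dr F n a b k k"

lemma Dr_stable: "i \<le> k \<Longrightarrow> Dr F n a b k i = dd F n a b i"
proof (induction k)
  case 0 then show ?case by (simp add: dd_def)
next
  case (Suc k)
  show ?case
  proof (cases "i = Suc k")
    case True then show ?thesis by (simp add: dd_def)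
  next
    case False then show ?thesis using Suc by simp
  qed
qed

lemma dd_0: "dd F n a b 0 = F 0 0 0 a b" by (simp add: dd_def)

lemma dd_Suc:
  assumes n: "n > 0" and k: "k < n"
  shows "dd F n a b (Suc k) = F (real k / real n) (Us0 n a b (dd F n a b) (real k / real n))
      (Us1 n a b (dd F n a b) (real k / real n)) (Us2 n a b (dd F n a b) (real k / real n))
      (Us3 n a b (dd F n a b) (real k / real n))"
proof -
  have t: "tk n k = real k / real n" using k by (simp add: tk_def)
  have x: "real k / real n \<in> {0..1}" using k by auto
  have nk: "real n * (real k / real n) \<le> real k" using n by simp
  have Z: "Z3 n (Dr F n a b k) (real k / real n) = Z3 n (dd F n a b) (real k / real n) \<and>
     Z2 n (Dr F n a b k) (real k / real n) = Z2 n (dd F n a b) (real k / real n) \<and>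
     Z1 n (Dr F n a b k) (real k / real n) = Z1 n (dd F n a b) (real k / real n) \<and>
     Z0 n (Dr F n a b k) (real k / real n) = Z0 n (dd F n a b) (real k / real n)"
    by (rule Z_prefix[OF _ x nk]) (simp add: Dr_stable)
  show ?thesis
    by (simp add: dd_def[of F n a b "Suc k"] t Us0_def Us1_def Us2_def Us3_def Z)
qed

lemma Dr_cont:
  assumes UC: "UC5 F" and n: "n > 0"
  shows "continuous_on UNIV (\<lambda>p::real\<times>real. Dr F n (fst p) (snd p) k i)"
proof (induction k arbitrary: i)
  case 0
  show ?case unfolding continuous_on_def
  proof (intro ballI)
    fix p0 :: "real \<times> real"
    show "((\<lambda>p. Dr F n (fst p) (snd p) 0 i) \<longlongrightarrow> Dr F n (fst p0) (snd p0) 0 i) (at p0 within UNIV)"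
      by (simp, rule UC5_tendsto[OF UC]) (auto intro!: tendsto_intros)
  qed
next
  case (Suc k)
  show ?case
  proof (cases "i = Suc k")
    case False
    then show ?thesis using Suc.IH[of i] by simp
  next
    case True
    define t where "t = tk n k"
    have t01: "t \<in> {0..1}" using tk01[OF n] by (simp add: t_def)
    define Dp where "Dp p = Dr F n (fst p) (snd p) k" for p :: "real \<times> real"
    have IH: "isCont (\<lambda>p. Dp p j) p0" for j p0
      using Suc.IH[of j] unfolding Dp_def continuous_on_eq_continuous_at[OF open_UNIV] by blast
    show ?thesis unfolding continuous_on_def
    proof (intro ballI)
      fix p0 :: "real \<times> real"
      define h where "h p = \<bar>fst p - fst p0\<bar> + \<bar>snd p - snd p0\<bar> + sdiff n (Dp p) (Dp p0)" for p
      have h0: "(h \<longlongrightarrow> 0) (at p0)"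
      proof -
        have "(h \<longlongrightarrow> h p0) (at p0)"
          unfolding h_def sdiff_def
          by (intro tendsto_intros IH[unfolded isCont_def])
        then show ?thesis by (simp add: h_def sdiff_def)
      qed
      have U: "((\<lambda>p. Usj n (fst p) (snd p) (Dp p) t) \<longlongrightarrow> Usj n (fst p0) (snd p0) (Dp p0) t) (at p0)"
        if "\<And>a b d a' b' d'. \<bar>Usj n a b d t - Usj n a' b' d' t\<bar> \<le> \<bar>a - a'\<bar> + \<bar>b - b'\<bar> + sdiff n d d'"
        for Usj
        by (rule bound_tendsto[OF _ h0]) (simp add: h_def that)
      have "((\<lambda>p. F t (Us0 n (fst p) (snd p) (Dp p) t) (Us1 n (fst p) (snd p) (Dp p) t)
            (Us2 n (fst p) (snd p) (Dp p) t) (Us3 n (fst p) (snd p) (Dp p) t)) \<longlongrightarrow>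
          F t (Us0 n (fst p0) (snd p0) (Dp p0) t) (Us1 n (fst p0) (snd p0) (Dp p0) t)
            (Us2 n (fst p0) (snd p0) (Dp p0) t) (Us3 n (fst p0) (snd p0) (Dp p0) t)) (at p0)"
        by (rule UC5_tendsto[OF UC tendsto_const]; rule U; rule Us_diff[OF t01])
      then show "((\<lambda>p. Dr F n (fst p) (snd p) (Suc k) i) \<longlongrightarrow> Dr F n (fst p0) (snd p0) (Suc k) i) (at p0 within UNIV)"
        using True by (simp add: Dp_def t_def)
    qed
  qed
qed

lemma Dr_bound:
  assumes Fb: "\<And>x a b c d. \<bar>F x a b c d\<bar> \<le> K"
  shows "\<bar>Dr F n a b k i\<bar> \<le> K"
  by (induction k arbitrary: i) (auto simp: Fb)

lemma dd_bound:
  assumes Fb: "\<And>x a b c d. \<bar>F x a b c d\<bar> \<le> K"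
  shows "\<bar>dd F n a b i\<bar> \<le> K"
  unfolding dd_def by (rule Dr_bound[OF Fb])

lemma Zdd_tendsto:
  assumes UC: "UC5 F" and n: "n > 0"
    and Zb: "\<And>d d'. \<bar>Zj d - Zj d'\<bar> \<le> sdiff n d d'"
  shows "((\<lambda>p::real\<times>real. Zj (dd F n (fst p) (snd p))) \<longlongrightarrow> Zj (dd F n (fst p0) (snd p0))) (at p0)"
proof (rule bound_tendsto[OF Zb])
  have c: "isCont (\<lambda>p::real\<times>real. dd F n (fst p) (snd p) j) p0" for j
    using Dr_cont[OF UC n, of j j] unfolding continuous_on_eq_continuous_at[OF open_UNIV] dd_def by blast
  have "((\<lambda>p. sdiff n (dd F n (fst p) (snd p)) (dd F n (fst p0) (snd p0))) \<longlongrightarrow>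
       sdiff n (dd F n (fst p0) (snd p0)) (dd F n (fst p0) (snd p0))) (at p0)"
    unfolding sdiff_def by (intro tendsto_intros c[unfolded isCont_def])
  then show "((\<lambda>p. sdiff n (dd F n (fst p) (snd p)) (dd F n (fst p0) (snd p0))) \<longlongrightarrow> 0) (at p0)"
    by (simp add: sdiff_def)
qed

lemma approx:
  fixes F :: "real \<Rightarrow> real \<Rightarrow> real \<Rightarrow> real \<Rightarrow> real \<Rightarrow> real"
  assumes UC: "UC5 F" and Fb: "\<And>x a b c d. \<bar>F x a b c d\<bar> \<le> K" and n: "n > 0"
  shows "\<exists>U0 U1 U2 U3 H. (\<forall>x\<in>{0..1}. (U0 has_real_derivative U1 x) (at x within {0..1}) \<and>
      (U1 has_real_derivative U2 x) (at x within {0..1}) \<and> (U2 has_real_derivative U3 x) (at x within {0..1}) \<and>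
      (U3 has_real_derivative H x) (at x within {0..1})) \<and>
      U0 0 = 0 \<and> U1 0 = 0 \<and> U0 1 = 0 \<and> U1 1 = 0 \<and>
      (\<forall>x\<in>{0..1}. \<bar>H x\<bar> \<le> K \<and> \<bar>U0 x\<bar> \<le> 37 * K \<and> \<bar>U1 x\<bar> \<le> 37 * K \<and> \<bar>U2 x\<bar> \<le> 37 * K \<and> \<bar>U3 x\<bar> \<le> 37 * K) \<and>
      (\<forall>x\<in>{0..1}. \<forall>v e. (\<forall>t\<in>{0..1}. \<bar>t - x\<bar> \<le> 2 / real n \<longrightarrow> \<bar>F t (U0 t) (U1 t) (U2 t) (U3 t) - v\<bar> \<le> e)
          \<longrightarrow> \<bar>H x - v\<bar> \<le> e)"
proof -
  have K0: "0 \<le> K" using Fb[of 0 0 0 0 0] by simp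
  define R where "R = 18 * K"
  define S where "S = cbox (-R, -R) (R, R)"
  define ddp where "ddp p = dd F n (fst p) (snd p)" for p :: "real \<times> real"
  define T where "T p = (2 * Z1 n (ddp p) 1 - 6 * Z0 n (ddp p) 1, 12 * Z0 n (ddp p) 1 - 6 * Z1 n (ddp p) 1)" for p
  have one: "(1::real) \<in> {0..1}" by simp
  have c0: "continuous_on UNIV (\<lambda>p. Z0 n (ddp p) 1)" unfolding continuous_on_eq_continuous_at[OF open_UNIV] isCont_def ddp_def
    using Zdd_tendsto[OF UC n, of "\<lambda>d. Z0 n d 1"] Z_diff[OF one] by blast
  have c1: "continuous_on UNIV (\<lambda>p. Z1 n (ddp p) 1)" unfolding continuous_on_eq_continuous_at[OF open_UNIV] isCont_def ddp_def
    using Zdd_tendsto[OF UC n, of "\<lambda>d. Z1 n d 1"] Z_diff[OF one] by blast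
  have cT: "continuous_on S T" unfolding T_def
    by (intro continuous_on_Pair continuous_intros continuous_on_subset[OF c0] continuous_on_subset[OF c1]) auto
  have zb: "\<bar>Z0 n (ddp p) 1\<bar> \<le> K" "\<bar>Z1 n (ddp p) 1\<bar> \<le> K" for p
    using Z_bound[OF n one, of "ddp p" K] dd_bound[OF Fb] by (auto simp: ddp_def)
  have memS: "q \<in> S \<longleftrightarrow> \<bar>fst q\<bar> \<le> R \<and> \<bar>snd q\<bar> \<le> R" for q
    by (cases q) (auto simp: S_def cbox_Pair_eq abs_le_iff)
  have TS: "T \<in> S \<rightarrow> S"
  proof
    fix p assume "p \<in> S"
    have "\<bar>2 * Z1 n (ddp p) 1 - 6 * Z0 n (ddp p) 1\<bar> \<le> R" "\<bar>12 * Z0 n (ddp p) 1 - 6 * Z1 n (ddp p) 1\<bar> \<le> R"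
      using zb[of p] K0 by (simp_all add: R_def abs_le_iff; linarith)+
    then show "T p \<in> S" by (simp add: memS T_def)
  qed
  have "compact S" "convex S" unfolding S_def by (rule compact_cbox, rule convex_box)
  moreover have "S \<noteq> {}" using K0 by (auto simp: S_def R_def cbox_Pair_eq)
  ultimately
  obtain p where pS: "p \<in> S" and fp: "T p = p" using brouwer[OF _ _ _ cT TS] by metis
  define a where "a = fst p"
  define b where "b = snd p"
  define d where "d = ddp p"
  have ab: "\<bar>a\<bar> \<le> R" "\<bar>b\<bar> \<le> R" using pS by (auto simp: memS a_def b_def)
  have aeq: "a = 2 * Z1 n d 1 - 6 * Z0 n d 1" and beq: "b = 12 * Z0 n d 1 - 6 * Z1 n d 1"
    using fp by (auto simp: T_def a_def b_def d_def prod_eq_iff)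
  have dK: "\<bar>d k\<bar> \<le> K" for k using dd_bound[OF Fb] by (simp add: d_def ddp_def)
  have d0: "d 0 = F 0 (Us0 n a b d 0) (Us1 n a b d 0) (Us2 n a b d 0) (Us3 n a b d 0)"
    by (simp add: d_def ddp_def dd_0 Us_at0 a_def b_def)
  have dS: "d (Suc j) = F (real j / real n) (Us0 n a b d (real j / real n))
      (Us1 n a b d (real j / real n)) (Us2 n a b d (real j / real n))
      (Us3 n a b d (real j / real n))" if "j < n" for j
    unfolding d_def ddp_def a_def b_def by (rule dd_Suc[OF n that])
  show ?thesis
  proof (intro exI conjI ballI allI impI)
    fix x :: real assume x: "x \<in> {0..1}"
    show "(Us0 n a b d has_real_derivative Us1 n a b d x) (at x within {0..1})"
         "(Us1 n a b d has_real_derivative Us2 n a b d x) (at x within {0..1})"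
         "(Us2 n a b d has_real_derivative Us3 n a b d x) (at x within {0..1})"
         "(Us3 n a b d has_real_derivative Hs n d x) (at x within {0..1})"
      using Us_deriv[OF x] by auto
    show "\<bar>Hs n d x\<bar> \<le> K" by (rule Hs_bound[OF n x]) (use dK in auto)
    have zb': "\<bar>Z0 n d x\<bar> \<le> K" "\<bar>Z1 n d x\<bar> \<le> K" "\<bar>Z2 n d x\<bar> \<le> K" "\<bar>Z3 n d x\<bar> \<le> K"
      using Z_bound[OF n x, of d K] dK by auto
    have x0: "0 \<le> x" and x1: "x \<le> 1" using x by auto
    have p1: "\<bar>x\<bar> \<le> 1" "\<bar>x^2\<bar> \<le> 1" "\<bar>x^3\<bar> \<le> 1" using x0 x1 by (auto simp: power_le_one)
    have m: "\<bar>c * y\<bar> \<le> \<bar>c\<bar>" if "\<bar>y\<bar> \<le> 1" for c y :: real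
      using that by (simp add: abs_mult mult_left_le)
    have ma: "\<bar>a * x\<^sup>2\<bar> \<le> R" "\<bar>b * x ^ 3\<bar> \<le> R" "\<bar>a * x\<bar> \<le> R" "\<bar>b * x\<^sup>2\<bar> \<le> R" "\<bar>b * x\<bar> \<le> R"
      using m[OF p1(2), of a] m[OF p1(3), of b] m[OF p1(1), of a] m[OF p1(2), of b] m[OF p1(1), of b] ab
      by linarith+
    show "\<bar>Us0 n a b d x\<bar> \<le> 37 * K" "\<bar>Us1 n a b d x\<bar> \<le> 37 * K" "\<bar>Us2 n a b d x\<bar> \<le> 37 * K" "\<bar>Us3 n a b d x\<bar> \<le> 37 * K"
      unfolding Us0_def Us1_def Us2_def Us3_def using ma zb' ab K0
      by (simp_all add: R_def abs_le_iff; linarith)+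
  next
    fix x v e :: real assume x: "x \<in> {0..1}"
      and h: "\<forall>t\<in>{0..1}. \<bar>t - x\<bar> \<le> 2 / real n \<longrightarrow> \<bar>F t (Us0 n a b d t) (Us1 n a b d t) (Us2 n a b d t) (Us3 n a b d t) - v\<bar> \<le> e"
    show "\<bar>Hs n d x - v\<bar> \<le> e"
    proof (rule Hs_convex[OF n x])
      fix k assume k: "k \<le> n" and kx: "\<bar>real n * x - real k\<bar> < 1"
      have nn: "real n > 0" using n by simp
      show "\<bar>d k - v\<bar> \<le> e"
      proof (cases k)
        case 0
        have "\<bar>0 - x\<bar> \<le> 2 / real n"
        proof -
          have "real n * x < 1" using kx 0 by simp
          then have "x \<le> 2 / real n" using nn by (simp add: field_simps)
          then show ?thesis using x by simp
        qed
        then show ?thesis using h[rule_format, of 0] d0 0 by simp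
      next
        case (Suc j)
        have j: "j < n" using k Suc by simp
        have t01: "real j / real n \<in> {0..1}" using j by auto
        have "\<bar>real j / real n - x\<bar> \<le> 2 / real n"
        proof -
          have "\<bar>real j - real n * x\<bar> \<le> 2" using kx Suc by simp
          then have "\<bar>(real j - real n * x) / real n\<bar> \<le> 2 / real n"
            using nn by (simp add: abs_divide divide_right_mono)
          moreover have "(real j - real n * x) / real n = real j / real n - x" using nn by (simp add: field_simps)
          ultimately show ?thesis by simp
        qed
        then show ?thesis using h[rule_format, OF t01] dS[OF j] Suc by simp
      qed
    qed
  next
    show "Us0 n a b d 0 = 0" "Us1 n a b d 0 = 0" by (simp_all add: Us_at0)
    show "Us0 n a b d 1 = 0" unfolding Us0_def using aeq beq by (simp add: field_simps)
    show "Us1 n a b d 1 = 0" unfolding Us1_def using aeq beq by (simp add: field_simps)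
  qed
qed

definition clp :: "real \<Rightarrow> real \<Rightarrow> real" where "clp r s = max (- r) (min r s)"

lemma clamp_bound: "0 \<le> r \<Longrightarrow> \<bar>clp r s\<bar> \<le> r" by (simp add: clp_def abs_le_iff)
lemma clamp_id: "\<bar>s\<bar> \<le> r \<Longrightarrow> clp r s = s" by (simp add: clp_def abs_le_iff)
lemma clamp_lip: "0 \<le> r \<Longrightarrow> \<bar>clp r s - clp r s'\<bar> \<le> \<bar>s - s'\<bar>" by (simp add: clp_def abs_le_iff max_def min_def abs_if)

definition c01 :: "real \<Rightarrow> real" where "c01 x = max 0 (min 1 x)"
lemma c01_in: "c01 x \<in> {0..1}" by (simp add: c01_def)
lemma c01_id: "x \<in> {0..1} \<Longrightarrow> c01 x = x" by (simp add: c01_def)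
lemma c01_lip: "\<bar>c01 x - c01 x'\<bar> \<le> \<bar>x - x'\<bar>" by (simp add: c01_def abs_le_iff max_def min_def abs_if)

lemma dist_pair_le: "dist (a, b) (c, d) \<le> dist a c + dist b d"
  unfolding dist_Pair_Pair by (rule sqrt_sum_squares_le_sum) auto

lemma UC5_clamped:
  fixes f :: "real \<Rightarrow> real \<Rightarrow> real \<Rightarrow> real \<Rightarrow> real \<Rightarrow> real"
  assumes cont: "continuous_on ({0..1} \<times> UNIV) (\<lambda>(x,u,y,v,z). f x u y v z)"
    and r: "0 \<le> r1" "0 \<le> r2" "0 \<le> r3" "0 \<le> r4"
  shows "UC5 (\<lambda>x a b c d. f (c01 x) (clp r1 a) (clp r2 b) (clp r3 c) (clp r4 d))"
proof -
  define Q where "Q = {0..1::real} \<times> ({-r1..r1} \<times> ({-r2..r2} \<times> ({-r3..r3} \<times> {-r4..r4::real})))"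
  have "compact Q" unfolding Q_def by (intro compact_Times compact_Icc)
  moreover have "continuous_on Q (\<lambda>(x,u,y,v,z). f x u y v z)"
    by (rule continuous_on_subset[OF cont]) (auto simp: Q_def)
  ultimately have uc: "uniformly_continuous_on Q (\<lambda>(x,u,y,v,z). f x u y v z)"
    by (rule compact_uniformly_continuous[rotated])
  show ?thesis unfolding UC5_def
  proof (intro allI impI)
    fix e :: real assume e: "e > 0"
    obtain d where d: "d > 0" and hd: "\<And>p p'. p \<in> Q \<Longrightarrow> p' \<in> Q \<Longrightarrow> dist p' p < d \<Longrightarrow>
        dist ((\<lambda>(x,u,y,v,z). f x u y v z) p') ((\<lambda>(x,u,y,v,z). f x u y v z) p) < e"
      using uc e unfolding uniformly_continuous_on_def by metis
    show "\<exists>\<delta>>0. \<forall>x a b c d x' a' b' c' d'. \<bar>x - x'\<bar> < \<delta> \<longrightarrow> \<bar>a - a'\<bar> < \<delta> \<longrightarrow>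
      \<bar>b - b'\<bar> < \<delta> \<longrightarrow> \<bar>c - c'\<bar> < \<delta> \<longrightarrow> \<bar>d - d'\<bar> < \<delta> \<longrightarrow>
      \<bar>f (c01 x) (clp r1 a) (clp r2 b) (clp r3 c) (clp r4 d) -
       f (c01 x') (clp r1 a') (clp r2 b') (clp r3 c') (clp r4 d')\<bar> < e"
    proof (intro exI[of _ "d/5"] conjI allI impI)
      show "d / 5 > 0" using d by simp
      fix x a b c dd x' a' b' c' dd' :: real
      assume h: "\<bar>x - x'\<bar> < d/5" "\<bar>a - a'\<bar> < d/5" "\<bar>b - b'\<bar> < d/5" "\<bar>c - c'\<bar> < d/5" "\<bar>dd - dd'\<bar> < d/5"
      define p where "p = (c01 x, clp r1 a, clp r2 b, clp r3 c, clp r4 dd)"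
      define p' where "p' = (c01 x', clp r1 a', clp r2 b', clp r3 c', clp r4 dd')"
      have pQ: "p \<in> Q" "p' \<in> Q" unfolding p_def p'_def Q_def
        using r by (auto simp: clp_def c01_def)
      have "dist p' p \<le> \<bar>c01 x' - c01 x\<bar> + (\<bar>clp r1 a' - clp r1 a\<bar> + (\<bar>clp r2 b' - clp r2 b\<bar>
          + (\<bar>clp r3 c' - clp r3 c\<bar> + \<bar>clp r4 dd' - clp r4 dd\<bar>)))"
        unfolding p_def p'_def
        by (rule order_trans[OF dist_pair_le], simp add: dist_real_def,
            rule order_trans[OF dist_pair_le], simp add: dist_real_def,
            rule order_trans[OF dist_pair_le], simp add: dist_real_def,
            rule order_trans[OF dist_pair_le], simp add: dist_real_def)
      also have "\<dots> < d"
        using c01_lip[of x' x] clamp_lip[OF r(1), of a' a] clamp_lip[OF r(2), of b' b]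
          clamp_lip[OF r(3), of c' c] clamp_lip[OF r(4), of dd' dd] h
        by (simp add: abs_minus_commute)
      finally have "dist p' p < d" .
      from hd[OF pQ this] show "\<bar>f (c01 x) (clp r1 a) (clp r2 b) (clp r3 c) (clp r4 dd) -
       f (c01 x') (clp r1 a') (clp r2 b') (clp r3 c') (clp r4 dd')\<bar> < e"
        by (simp add: p_def p'_def dist_real_def abs_minus_commute)
    qed
  qed
qed

lemma uniform_limit_subseq:
  assumes "uniform_limit S (\<lambda>n. g (r n)) w sequentially" "strict_mono s"
  shows "uniform_limit S (\<lambda>n. g (r (s n))) w sequentially"
  using assms unfolding uniform_limit_sequentially_iff
  by (meson order_trans seq_suble)

lemma uniform_limit_pointwise:
  assumes "uniform_limit S f w sequentially" "x \<in> S"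
  shows "(\<lambda>n. f n x) \<longlonglongrightarrow> w x"
  using assms unfolding uniform_limit_sequentially_iff LIMSEQ_def by blast

lemma deriv_limit:
  fixes f f' :: "nat \<Rightarrow> real \<Rightarrow> real"
  assumes d: "\<And>n x. x \<in> {0..1} \<Longrightarrow> (f n has_real_derivative f' n x) (at x within {0..1})"
    and ul: "uniform_limit {0..1} f' g' sequentially"
    and ulf: "uniform_limit {0..1} f w sequentially"
    and x: "x \<in> {0..1}"
  shows "(w has_real_derivative g' x) (at x within {0..1})"
proof -
  have derf: "\<And>n x. x \<in> {0..1} \<Longrightarrow> (f n has_derivative (\<lambda>h. f' n x * h)) (at x within {0..1})"
    using d by (simp add: has_field_derivative_def)
  have nle: "\<forall>\<^sub>F n in sequentially. \<forall>x\<in>{0..1}. \<forall>h. norm (f' n x * h - g' x * h) \<le> e * norm h" if e: "e > 0" for e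
  proof -
    have "\<forall>\<^sub>F n in sequentially. \<forall>x\<in>{0..1}. dist (f' n x) (g' x) < e"
      using uniform_limitD[OF ul e] .
    then show ?thesis
    proof (rule eventually_mono)
      fix n assume h: "\<forall>x\<in>{0..1}. dist (f' n x) (g' x) < e"
      show "\<forall>x\<in>{0..1}. \<forall>h. norm (f' n x * h - g' x * h) \<le> e * norm h"
      proof (intro ballI allI)
        fix x h assume x: "x \<in> {0..1::real}"
        have "\<bar>f' n x - g' x\<bar> \<le> e" using h x by (simp add: dist_real_def less_imp_le)
        then have "\<bar>f' n x - g' x\<bar> * \<bar>h\<bar> \<le> e * \<bar>h\<bar>" by (rule mult_right_mono) simp
        then show "norm (f' n x * h - g' x * h) \<le> e * norm h"
          by (simp add: abs_mult[symmetric] left_diff_distrib)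
      qed
    qed
  qed
  have lim0: "(\<lambda>n. f n 0) \<longlonglongrightarrow> w 0" by (rule uniform_limit_pointwise[OF ulf]) simp
  obtain G where G: "\<And>y. y \<in> {0..1} \<Longrightarrow> (\<lambda>n. f n y) \<longlonglongrightarrow> G y \<and> (G has_derivative (\<lambda>h. g' y * h)) (at y within {0..1})"
    using has_derivative_sequence[OF convex_real_interval(5) derf nle _ lim0] by force
  have Gw: "G y = w y" if "y \<in> {0..1}" for y
    using LIMSEQ_unique[OF conjunct1[OF G[OF that]] uniform_limit_pointwise[OF ulf that]] .
  have "(G has_derivative (\<lambda>h. g' x * h)) (at x within {0..1})" using G[OF x] by blast
  then have "(w has_derivative (\<lambda>h. g' x * h)) (at x within {0..1})"
    by (rule has_derivative_transform[OF x, rotated]) (simp add: Gw)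
  then show ?thesis by (simp add: has_field_derivative_def)
qed

lemma ul_subseq:
  assumes "uniform_limit S h w sequentially" "strict_mono s"
  shows "uniform_limit S (\<lambda>n. h (s n)) w sequentially"
  using assms unfolding uniform_limit_sequentially_iff
  by (meson order_trans seq_suble)

theorem lemma1:
  fixes f :: "real \<Rightarrow> real \<Rightarrow> real \<Rightarrow> real \<Rightarrow> real \<Rightarrow> real" and M :: real
  assumes cont: "continuous_on ({0..1} \<times> UNIV) (\<lambda>(x,u,y,v,z). f x u y v z)"
    and Mpos: "M > 0"
    and bound: "\<forall>(x,u,y,v,z)\<in>D_M M. \<bar>f x u y v z\<bar> \<le> M / 2"
  shows "\<exists>u u1 u2 u3 u4. C4_with_derivs u u1 u2 u3 u4 \<and>
           (\<forall>x\<in>{0<..<1}. u4 x = f x (u x) (u1 x) (u2 x) (u3 x)) \<and>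
           u 0 = 0 \<and> u 1 = 0 \<and> u1 0 = 0 \<and> u1 1 = 0"
proof -
  define K where "K = M / 2"
  have K: "K > 0" using Mpos by (simp add: K_def)
  define R1 where "R1 = M / 384"
  define R2 where "R2 = M / (72 * sqrt 3)"
  have R: "0 \<le> R1" "0 \<le> R2" "0 \<le> M" using less_imp_le[OF Mpos] by (simp_all add: R1_def R2_def)
  define F where "F = (\<lambda>x a b c d. f (c01 x) (clp R1 a) (clp R2 b) (clp M c) (clp M d))"
  have UC: "UC5 F" unfolding F_def by (rule UC5_clamped[OF cont R(1) R(2) R(3) R(3)])
  have inD: "(c01 x, clp R1 a, clp R2 b, clp M c, clp M d) \<in> D_M M" for x a b c d
    using c01_in[of x] clamp_bound[OF R(1), of a] clamp_bound[OF R(2), of b]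
      clamp_bound[OF R(3), of c] clamp_bound[OF R(3), of d]
    by (simp add: D_M_def R1_def R2_def)
  have Fb: "\<bar>F x a b c d\<bar> \<le> K" for x a b c d
    using bound inD[of x a b c d] unfolding F_def K_def by fastforce
  define L where "L = 37 * K"
  have KL: "K \<le> L" using K by (simp add: L_def)
  define \<Psi> where "\<Psi> n U0 U1 U2 U3 H \<longleftrightarrow> (\<forall>x\<in>{0..1}. (U0 has_real_derivative U1 x) (at x within {0..1}) \<and>
      (U1 has_real_derivative U2 x) (at x within {0..1}) \<and> (U2 has_real_derivative U3 x) (at x within {0..1}) \<and>
      (U3 has_real_derivative H x) (at x within {0..1})) \<and>
      U0 0 = 0 \<and> U1 0 = 0 \<and> U0 1 = 0 \<and> U1 1 = 0 \<and>
      (\<forall>x\<in>{0..1}. \<bar>H x\<bar> \<le> K \<and> \<bar>U0 x\<bar> \<le> 37 * K \<and> \<bar>U1 x\<bar> \<le> 37 * K \<and> \<bar>U2 x\<bar> \<le> 37 * K \<and> \<bar>U3 x\<bar> \<le> 37 * K) \<and>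
      (\<forall>x\<in>{0..1}. \<forall>v e. (\<forall>t\<in>{0..1}. \<bar>t - x\<bar> \<le> 2 / real n \<longrightarrow> \<bar>F t (U0 t) (U1 t) (U2 t) (U3 t) - v\<bar> \<le> e)
          \<longrightarrow> \<bar>H x - v\<bar> \<le> e)" for n and U0 U1 U2 U3 H :: "real \<Rightarrow> real"
  have "\<forall>m. \<exists>T. \<Psi> (Suc m) (fst T) (fst (snd T)) (fst (snd (snd T))) (fst (snd (snd (snd T)))) (snd (snd (snd (snd T))))"
  proof
    fix m
    obtain U0 U1 U2 U3 H where "\<Psi> (Suc m) U0 U1 U2 U3 H"
      using approx[OF UC Fb, of "Suc m"] unfolding \<Psi>_def by auto
    then show "\<exists>T. \<Psi> (Suc m) (fst T) (fst (snd T)) (fst (snd (snd T))) (fst (snd (snd (snd T)))) (snd (snd (snd (snd T))))"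
      by (intro exI[of _ "(U0, U1, U2, U3, H)"]) simp
  qed
  then obtain T where T: "\<And>m. \<Psi> (Suc m) (fst (T m)) (fst (snd (T m))) (fst (snd (snd (T m)))) (fst (snd (snd (snd (T m))))) (snd (snd (snd (snd (T m)))))"
    by (metis choice)
  define U0 where "U0 m = fst (T m)" for m
  define U1 where "U1 m = fst (snd (T m))" for m
  define U2 where "U2 m = fst (snd (snd (T m)))" for m
  define U3 where "U3 m = fst (snd (snd (snd (T m))))" for m
  define H where "H m = snd (snd (snd (snd (T m))))" for m
  have P: "\<Psi> (Suc m) (U0 m) (U1 m) (U2 m) (U3 m) (H m)" for m
    using T[of m] by (simp add: U0_def U1_def U2_def U3_def H_def)
  note PP = P[unfolded \<Psi>_def]
  have dU0: "\<And>x. x \<in> {0..1} \<Longrightarrow> (U0 m has_real_derivative U1 m x) (at x within {0..1})"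
   and dU1: "\<And>x. x \<in> {0..1} \<Longrightarrow> (U1 m has_real_derivative U2 m x) (at x within {0..1})"
   and dU2: "\<And>x. x \<in> {0..1} \<Longrightarrow> (U2 m has_real_derivative U3 m x) (at x within {0..1})"
   and dU3: "\<And>x. x \<in> {0..1} \<Longrightarrow> (U3 m has_real_derivative H m x) (at x within {0..1})"
   for m using PP[of m] by blast+
  have bc: "U0 m 0 = 0" "U1 m 0 = 0" "U0 m 1 = 0" "U1 m 1 = 0" for m
    using PP[of m] by blast+
  have bH: "\<bar>H m x\<bar> \<le> L" if "x \<in> {0..1}" for m x
  proof -
    have "\<bar>H m x\<bar> \<le> K" using PP[of m] that by blast
    then show ?thesis using KL by linarith
  qed
  have bU: "\<bar>U0 m x\<bar> \<le> L \<and> \<bar>U1 m x\<bar> \<le> L \<and> \<bar>U2 m x\<bar> \<le> L \<and> \<bar>U3 m x\<bar> \<le> L" if "x \<in> {0..1}" for m x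
    unfolding L_def using PP[of m] that by blast
  have ap: "\<bar>H m x - v\<bar> \<le> e" if "x \<in> {0..1}" "\<forall>t\<in>{0..1}. \<bar>t - x\<bar> \<le> 2 / real (Suc m) \<longrightarrow>
        \<bar>F t (U0 m t) (U1 m t) (U2 m t) (U3 m t) - v\<bar> \<le> e" for m x v e
  proof -
    have "\<forall>x\<in>{0..1}. \<forall>v e. (\<forall>t\<in>{0..1}. \<bar>t - x\<bar> \<le> 2 / real (Suc m) \<longrightarrow>
        \<bar>F t (U0 m t) (U1 m t) (U2 m t) (U3 m t) - v\<bar> \<le> e) \<longrightarrow> \<bar>H m x - v\<bar> \<le> e"
      using PP[of m] by blast
    then show ?thesis using that by blast
  qed
  have lip: "\<bar>U0 m x - U0 m y\<bar> \<le> L * \<bar>x - y\<bar> \<and> \<bar>U1 m x - U1 m y\<bar> \<le> L * \<bar>x - y\<bar> \<and>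
      \<bar>U2 m x - U2 m y\<bar> \<le> L * \<bar>x - y\<bar> \<and> \<bar>U3 m x - U3 m y\<bar> \<le> L * \<bar>x - y\<bar>"
    if "x \<in> {0..1}" "y \<in> {0..1}" for m x y
  proof -
    have b1: "\<And>x. x \<in> {0..1} \<Longrightarrow> \<bar>U1 m x\<bar> \<le> L" and b2: "\<And>x. x \<in> {0..1} \<Longrightarrow> \<bar>U2 m x\<bar> \<le> L"
      and b3: "\<And>x. x \<in> {0..1} \<Longrightarrow> \<bar>U3 m x\<bar> \<le> L" using bU by blast+
    show ?thesis using lip01[OF dU0 b1 that] lip01[OF dU1 b2 that] lip01[OF dU2 b3 that] lip01[OF dU3 bH that] by blast
  qed
  obtain q1 w3 where q1: "strict_mono q1" and ul3: "uniform_limit {0..1} (\<lambda>n. U3 (q1 n)) w3 sequentially"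
    using ascoli[of U3 L L] bU lip by blast
  obtain q2 w2 where q2: "strict_mono q2" and ul2: "uniform_limit {0..1} (\<lambda>n. U2 ((q1 \<circ> q2) n)) w2 sequentially"
    using ascoli[of "\<lambda>n. U2 (q1 n)" L L] bU lip by (auto simp: o_def)
  obtain q3 w1 where q3: "strict_mono q3" and ul1: "uniform_limit {0..1} (\<lambda>n. U1 ((q1 \<circ> q2 \<circ> q3) n)) w1 sequentially"
    using ascoli[of "\<lambda>n. U1 ((q1 \<circ> q2) n)" L L] bU lip by (auto simp: o_def)
  obtain q4 w0 where q4: "strict_mono q4" and ul0: "uniform_limit {0..1} (\<lambda>n. U0 ((q1 \<circ> q2 \<circ> q3 \<circ> q4) n)) w0 sequentially"
    using ascoli[of "\<lambda>n. U0 ((q1 \<circ> q2 \<circ> q3) n)" L L] bU lip by (auto simp: o_def)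
  define r where "r = q1 \<circ> q2 \<circ> q3 \<circ> q4"
  have r: "strict_mono r" unfolding r_def by (intro strict_mono_o q1 q2 q3 q4)
  have L0: "uniform_limit {0..1} (\<lambda>n. U0 (r n)) w0 sequentially" using ul0 by (simp add: r_def)
  have L1: "uniform_limit {0..1} (\<lambda>n. U1 (r n)) w1 sequentially"
    using ul_subseq[OF ul1 q4] by (simp add: r_def)
  have L2: "uniform_limit {0..1} (\<lambda>n. U2 (r n)) w2 sequentially"
    using ul_subseq[OF ul_subseq[OF ul2 q3] q4] by (simp add: r_def)
  have L3: "uniform_limit {0..1} (\<lambda>n. U3 (r n)) w3 sequentially"
    using ul_subseq[OF ul_subseq[OF ul_subseq[OF ul3 q2] q3] q4]
    by (simp add: r_def)
  define g where "g x = F x (w0 x) (w1 x) (w2 x) (w3 x)" for x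
  have LG: "uniform_limit {0..1} (\<lambda>n. H (r n)) g sequentially"
    unfolding uniform_limit_sequentially_iff
  proof (intro allI impI)
    fix e :: real assume e: "e > 0"
    obtain \<delta> where \<delta>: "\<delta> > 0" and h\<delta>: "\<And>x a b c d x' a' b' c' d'. \<bar>x - x'\<bar> < \<delta> \<Longrightarrow> \<bar>a - a'\<bar> < \<delta> \<Longrightarrow>
      \<bar>b - b'\<bar> < \<delta> \<Longrightarrow> \<bar>c - c'\<bar> < \<delta> \<Longrightarrow> \<bar>d - d'\<bar> < \<delta> \<Longrightarrow> \<bar>F x a b c d - F x' a' b' c' d'\<bar> < e/2"
      using UC e unfolding UC5_def by (metis half_gt_zero)
    have d2: "\<delta>/2 > 0" using \<delta> by simp
    obtain N0 where N0: "\<forall>n\<ge>N0. \<forall>x\<in>{0..1}. dist (U0 (r n) x) (w0 x) < \<delta>/2"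
      using L0 d2 unfolding uniform_limit_sequentially_iff by blast
    obtain N1 where N1: "\<forall>n\<ge>N1. \<forall>x\<in>{0..1}. dist (U1 (r n) x) (w1 x) < \<delta>/2"
      using L1 d2 unfolding uniform_limit_sequentially_iff by blast
    obtain N2 where N2: "\<forall>n\<ge>N2. \<forall>x\<in>{0..1}. dist (U2 (r n) x) (w2 x) < \<delta>/2"
      using L2 d2 unfolding uniform_limit_sequentially_iff by blast
    obtain N3 where N3: "\<forall>n\<ge>N3. \<forall>x\<in>{0..1}. dist (U3 (r n) x) (w3 x) < \<delta>/2"
      using L3 d2 unfolding uniform_limit_sequentially_iff by blast
    obtain N4 :: nat where N4: "4 * (L + 1) / \<delta> < real N4" using reals_Archimedean2 by blast
    define N where "N = max (max (max N0 N1) (max N2 N3)) N4"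
    show "\<exists>N. \<forall>n\<ge>N. \<forall>x\<in>{0..1}. dist (H (r n) x) (g x) < e"
    proof (intro exI allI impI ballI)
      fix n x assume n: "N \<le> n" and x: "x \<in> {0..(1::real)}"
      have L0': "0 \<le> L" using KL K by linarith
      have rn: "N4 \<le> r n" using n seq_suble[OF r, of n] by (simp add: N_def)
      have small: "2 / real (Suc (r n)) * (L + 1) < \<delta> / 2"
      proof -
        have "4 * (L + 1) / \<delta> < real (Suc (r n))" using N4 rn by linarith
        then have "4 * (L + 1) < real (Suc (r n)) * \<delta>" using \<delta> by (simp add: field_simps)
        then show ?thesis by (simp add: field_simps)
      qed
      have "\<bar>H (r n) x - g x\<bar> \<le> e/2"
      proof (rule ap[OF x], intro ballI impI)
        fix t assume t: "t \<in> {0..(1::real)}" and tx: "\<bar>t - x\<bar> \<le> 2 / real (Suc (r n))"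
        have tx1: "\<bar>t - x\<bar> * (L + 1) < \<delta> / 2"
          using mult_right_mono[OF tx, of "L + 1"] L0' small by linarith
        have m0: "0 \<le> \<bar>t - x\<bar> * L" using L0' by simp
        have e1: "\<bar>t - x\<bar> * (L + 1) = \<bar>t - x\<bar> * L + \<bar>t - x\<bar>" by (simp add: algebra_simps)
        have tx2: "\<bar>t - x\<bar> < \<delta>" using tx1 m0 e1 \<delta> by linarith
        have tx3: "L * \<bar>t - x\<bar> < \<delta>/2" using tx1 e1 m0 by (simp only: mult.commute[of L])
        have nN: "N0 \<le> n" "N1 \<le> n" "N2 \<le> n" "N3 \<le> n" using n by (auto simp: N_def)
        have w: "\<bar>U0 (r n) x - w0 x\<bar> < \<delta>/2" "\<bar>U1 (r n) x - w1 x\<bar> < \<delta>/2"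
           "\<bar>U2 (r n) x - w2 x\<bar> < \<delta>/2" "\<bar>U3 (r n) x - w3 x\<bar> < \<delta>/2"
          using N0 N1 N2 N3 nN x by (auto simp: dist_real_def)
        have lp: "\<bar>U0 (r n) t - U0 (r n) x\<bar> \<le> L * \<bar>t - x\<bar>" "\<bar>U1 (r n) t - U1 (r n) x\<bar> \<le> L * \<bar>t - x\<bar>"
           "\<bar>U2 (r n) t - U2 (r n) x\<bar> \<le> L * \<bar>t - x\<bar>" "\<bar>U3 (r n) t - U3 (r n) x\<bar> \<le> L * \<bar>t - x\<bar>"
          using lip[OF t x, of "r n"] by auto
        have cl: "\<bar>U0 (r n) t - w0 x\<bar> < \<delta>" "\<bar>U1 (r n) t - w1 x\<bar> < \<delta>"
          "\<bar>U2 (r n) t - w2 x\<bar> < \<delta>" "\<bar>U3 (r n) t - w3 x\<bar> < \<delta>"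
        proof -
          have tri: "\<bar>a - c\<bar> < \<delta>" if "\<bar>a - b\<bar> \<le> L * \<bar>t - x\<bar>" "\<bar>b - c\<bar> < \<delta>/2" for a b c
          proof -
            have "\<bar>a - c\<bar> \<le> \<bar>a - b\<bar> + \<bar>b - c\<bar>" by linarith
            then show ?thesis using that tx3 by linarith
          qed
          show "\<bar>U0 (r n) t - w0 x\<bar> < \<delta>" "\<bar>U1 (r n) t - w1 x\<bar> < \<delta>"
            "\<bar>U2 (r n) t - w2 x\<bar> < \<delta>" "\<bar>U3 (r n) t - w3 x\<bar> < \<delta>"
            using tri[OF lp(1) w(1)] tri[OF lp(2) w(2)] tri[OF lp(3) w(3)] tri[OF lp(4) w(4)] by auto
        qed
        have "\<bar>F t (U0 (r n) t) (U1 (r n) t) (U2 (r n) t) (U3 (r n) t) - F x (w0 x) (w1 x) (w2 x) (w3 x)\<bar> < e/2"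
          by (rule h\<delta>[OF tx2 cl])
        then show "\<bar>F t (U0 (r n) t) (U1 (r n) t) (U2 (r n) t) (U3 (r n) t) - g x\<bar> \<le> e/2"
          by (simp add: g_def)
      qed
      then show "dist (H (r n) x) (g x) < e" using e by (simp add: dist_real_def)
    qed
  qed
  have D0: "(w0 has_real_derivative w1 x) (at x within {0..1})" if "x \<in> {0..1}" for x
    by (rule deriv_limit[OF dU0 L1 L0 that])
  have D1: "(w1 has_real_derivative w2 x) (at x within {0..1})" if "x \<in> {0..1}" for x
    by (rule deriv_limit[OF dU1 L2 L1 that])
  have D2: "(w2 has_real_derivative w3 x) (at x within {0..1})" if "x \<in> {0..1}" for x
    by (rule deriv_limit[OF dU2 L3 L2 that])
  have D3: "(w3 has_real_derivative g x) (at x within {0..1})" if "x \<in> {0..1}" for x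
    by (rule deriv_limit[OF dU3 LG L3 that])
  have cw: "continuous_on {0..1} w0" "continuous_on {0..1} w1" "continuous_on {0..1} w2" "continuous_on {0..1} w3"
    using deriv_cont01[OF D0] deriv_cont01[OF D1] deriv_cont01[OF D2] deriv_cont01[OF D3] by auto
  have cg: "continuous_on {0..1} g"
    unfolding continuous_on_def g_def
  proof (intro ballI)
    fix x assume "x \<in> {0..(1::real)}"
    then show "((\<lambda>x. F x (w0 x) (w1 x) (w2 x) (w3 x)) \<longlongrightarrow> F x (w0 x) (w1 x) (w2 x) (w3 x)) (at x within {0..1})"
      using cw unfolding continuous_on_def
      by (intro UC5_tendsto[OF UC tendsto_ident_at]) auto
  qed
  have lim_const: "w x = 0" if "uniform_limit {0..1} (\<lambda>n. V (r n)) w sequentially" "\<And>m. V m x = 0" "x \<in> {0..1}"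
    for V w x
    using LIMSEQ_unique[OF uniform_limit_pointwise[OF that(1) that(3)]] that(2) by simp
  have bcw: "w0 0 = 0" "w0 1 = 0" "w1 0 = 0" "w1 1 = 0"
    using lim_const[OF L0, of 0] lim_const[OF L0, of 1] lim_const[OF L1, of 0] lim_const[OF L1, of 1] bc by auto
  have gb: "\<bar>g x\<bar> \<le> M / 2" for x using Fb by (simp add: g_def K_def)
  have inDw: "(x, w0 x, w1 x, w2 x, w3 x) \<in> D_M M" if "x \<in> {0..1}" for x
    by (rule apriori[OF D0 D1 D2 D3 cg bcw(1,2,3,4) gb Mpos that])
  have geq: "g x = f x (w0 x) (w1 x) (w2 x) (w3 x)" if x: "x \<in> {0..1}" for x
  proof -
    have "\<bar>w0 x\<bar> \<le> R1" "\<bar>w1 x\<bar> \<le> R2" "\<bar>w2 x\<bar> \<le> M" "\<bar>w3 x\<bar> \<le> M"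
      using inDw[OF x] by (auto simp: D_M_def R1_def R2_def)
    then show ?thesis by (simp add: g_def F_def c01_id[OF x] clamp_id)
  qed
  show ?thesis
  proof (intro exI conjI)
    show "C4_with_derivs w0 w1 w2 w3 g" unfolding C4_with_derivs_def using D0 D1 D2 D3 cg by blast
    show "\<forall>x\<in>{0<..<1}. g x = f x (w0 x) (w1 x) (w2 x) (w3 x)" using geq by auto
  qed (rule bcw)+
qed

end
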